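(* For all integers $n\ge 0$, all $\mathbf{s}=(s_1,\dots,s_d)\in\mathbb{N}^d$ and all $y\in[-\pi/2,\pi/2]$, \[ \sum_{n_1>\cdots>n_d>n}\frac{a_{n_1}(\sin y)}{(2n_1)^{s_1}\cdots(2n_d)^{s_d}} =\cot y\,\frac{d}{dy}\int_0^y p_{s_1}\circ\cdots\circ p_{s_d}\circ a_n(\sin t)\tan t\,dt , \] where for $y=\pm\pi/2$ the right-hand side is understood as the limit as $y\to\pm\pi/2$.
   Context: $\mathbb{N}=\{1,2,\dots\}$. Set $a_0(x)=1$ and $a_n(x)=\frac{1}{4^n}\binom{2n}{n}x^{2n}$ for $n\ge1$. Iterated integral notation: for 1-forms $f_1(t)dt,\dots,f_r(t)dt$, $\int_0^y f_1(t)dt\circ\cdots\circ f_r(t)dt:=\int_{y>t_1>\cdots>t_r>0}f_1(t_1)\cdots f_r(t_r)\,dt_1\cdots dt_r$ (the symbol $\circ$ may be omitted); $(\omega)^k$ denotes $\omega$ repeated $k$ times ($k=0$: empty). Words mixing functions and 1-forms are expanded by linearity using the rule that for functions $F,G$ and 1-forms $f\,dt$, $g\,dt$: $[F+f\,dt\circ G]\circ g\,dt:=F g\,dt+f\,dt\circ (Gg)\,dt$; i.e. a function placed after $\circ$ multiplies the 1-form that follows it. For $s\in\mathbb{N}$ define $p_s(t):=\tan t\,dt\,\left(\cot t\,dt\right)^{s-1}\left(1-\csc t\,dt\circ\sec t\right)$. *)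

theory Defs
  imports "HOL-Analysis.Analysis"
begin

definition a :: "nat \<Rightarrow> real \<Rightarrow> real" where
  "a n x = (if n = 0 then 1 else (real (2*n choose n) / 4 ^ n) * x ^ (2*n))"

definition sec :: "real \<Rightarrow> real" where "sec t = 1 / cos t"
definition csc :: "real \<Rightarrow> real" where "csc t = 1 / sin t"

text \<open>Iterated integral  int_0^y f_1 dt o ... o f_r dt  (signed, oriented interval integrals)\<close>
fun iter_int :: "(real \<Rightarrow> real) list \<Rightarrow> real \<Rightarrow> real" where
  "iter_int [] y = 1"
| "iter_int (f # fs) y = (LBINT t = ereal 0..ereal y. f t * iter_int fs t)"

text \<open>Letters of words mixing 1-forms (Form f = f(t) dt) and functions (Fun F).\<close>
datatype letter = Form "real \<Rightarrow> real" | Fun "real \<Rightarrow> real"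

text \<open>Expansion rule: a function placed after o multiplies the 1-form that follows it.\<close>
fun forms :: "letter list \<Rightarrow> (real \<Rightarrow> real) list" where
  "forms [] = []"
| "forms (Form f # w) = f # forms w"
| "forms (Fun g # Form f # w) = (\<lambda>t. g t * f t) # forms w"
| "forms (Fun g # Fun h # w) = forms (Fun (\<lambda>t. g t * h t) # w)"
| "forms [Fun g] = []"

type_synonym lword = "(real \<times> letter list) list"

definition cat :: "lword \<Rightarrow> lword \<Rightarrow> lword" where
  "cat A B = [(c * e, v @ w). (c, v) \<leftarrow> A, (e, w) \<leftarrow> B]"

text \<open>p_s = tan dt (cot dt)^(s-1) (1 - csc dt o sec)\<close>
definition p :: "nat \<Rightarrow> lword" where
  "p s = [(1, Form tan # replicate (s - 1) (Form cot)),
          (-1, Form tan # replicate (s - 1) (Form cot) @ [Form csc, Fun sec])]"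

definition W :: "nat list \<Rightarrow> nat \<Rightarrow> lword" where
  "W s n = foldr cat (map p s) [(1, [Fun (\<lambda>t. a n (sin t)), Form tan])]"

definition iter_int_lw :: "lword \<Rightarrow> real \<Rightarrow> real" where
  "iter_int_lw A y = (\<Sum>(c, w) \<leftarrow> A. c * iter_int (forms w) y)"

end

theory Submission
  imports Defs
begin


abbreviation II :: "real set" where "II \<equiv> {-(pi/2)<..<pi/2}"

definition Prim :: "(real \<Rightarrow> real) \<Rightarrow> real \<Rightarrow> real" where
  "Prim h y = (LBINT t=ereal 0..ereal y. h t)"

lemma iter_int_Cons: "iter_int (f # fs) = Prim (\<lambda>t. f t * iter_int fs t)"
  by (simp add: Prim_def fun_eq_iff)

lemma FTC_I:
  assumes h: "continuous_on II h" and y: "y \<in> II"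
  shows "(Prim h has_real_derivative h y) (at y)"
proof -
  define d where "d = (-pi/2 + min 0 y)/2"
  define e where "e = (pi/2 + max 0 y)/2"
  have y': "-pi/2 < y" "y < pi/2" using y by auto
  have pi: "pi > 0" by simp
  have de: "-pi/2 < d" "d < min 0 y" "max 0 y < e" "e < pi/2"
    using y' pi unfolding d_def e_def by (auto simp: min_def max_def)
  have c: "continuous_on {d..e} h"
    by (rule continuous_on_subset[OF h]) (use de in auto)
  have "((\<lambda>u. LBINT t=ereal 0..ereal u. h t) has_vector_derivative h y) (at y within {d..e})"
    by (rule interval_integral_FTC2[OF _ _ c]) (use de in auto)
  then have "((\<lambda>u. LBINT t=ereal 0..ereal u. h t) has_vector_derivative h y) (at y within {d<..<e})"
    by (rule has_vector_derivative_within_subset) auto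
  then have "((\<lambda>u. LBINT t=ereal 0..ereal u. h t) has_vector_derivative h y) (at y)"
    using de by (subst (asm) has_vector_derivative_within_open) auto
  then show ?thesis
    by (simp add: Prim_def[abs_def] has_real_derivative_iff_has_vector_derivative)
qed

lemma LB_eq:
  assumes h: "continuous_on II h" and F: "\<And>x. x \<in> II \<Longrightarrow> (F has_real_derivative h x) (at x)"
    and y: "y \<in> II"
  shows "Prim h y = F y - F 0"
proof -
  have sub: "{min 0 y..max 0 y} \<subseteq> II" using y by auto
  have "(LBINT t=ereal 0..ereal y. h t) = F y - F 0"
    apply (rule interval_integral_FTC_finite)
     apply (rule continuous_on_subset[OF h sub])
    using F sub by (metis has_real_derivative_iff_has_vector_derivative has_vector_derivative_at_within subsetD atLeastAtMost_iff)
  then show ?thesis by (simp add: Prim_def)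
qed

lemma Prim_0[simp]: "Prim h 0 = 0"
  by (simp add: Prim_def)

lemma Prim_cong:
  assumes "\<And>t. t \<in> II \<Longrightarrow> f t = g t" and y: "y \<in> II"
  shows "Prim f y = Prim g y"
  unfolding Prim_def
proof (rule interval_integral_cong)
  fix x assume "x \<in> einterval (min (ereal 0) (ereal y)) (max (ereal 0) (ereal y))"
  then have "x \<in> II" using y by (auto simp: einterval_iff min_def max_def split: if_splits)
  then show "f x = g x" using assms by auto
qed

lemma Prim_deriv_cont:
  assumes "continuous_on II h"
  shows "continuous_on II (Prim h)"
  using FTC_I[OF assms] by (meson DERIV_isCont continuous_at_imp_continuous_on)

lemma Prim_add:
  assumes f: "continuous_on II f" and g: "continuous_on II g" and y: "y \<in> II"
  shows "Prim (\<lambda>t. f t + g t) y = Prim f y + Prim g y"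
proof -
  have "Prim (\<lambda>t. f t + g t) y = (\<lambda>y. Prim f y + Prim g y) y - (\<lambda>y. Prim f y + Prim g y) 0"
    by (rule LB_eq[OF _ _ y]) (auto intro!: continuous_intros f g derivative_eq_intros FTC_I[OF f] FTC_I[OF g])
  then show ?thesis by simp
qed

lemma Prim_cmult:
  assumes f: "continuous_on II f" and y: "y \<in> II"
  shows "Prim (\<lambda>t. c * f t) y = c * Prim f y"
proof -
  have "Prim (\<lambda>t. c * f t) y = (\<lambda>y. c * Prim f y) y - (\<lambda>y. c * Prim f y) 0"
    by (rule LB_eq[OF _ _ y]) (auto intro!: continuous_intros f derivative_eq_intros FTC_I[OF f])
  then show ?thesis by simp
qed

lemma Prim_zero: "Prim (\<lambda>t. 0) y = 0"
  by (simp add: Prim_def)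

lemma Prim_sum_list:
  assumes "\<And>x. x \<in> set xs \<Longrightarrow> continuous_on II (h x)" and y: "y \<in> II"
  shows "Prim (\<lambda>t. \<Sum>x\<leftarrow>xs. c x * h x t) y = (\<Sum>x\<leftarrow>xs. c x * Prim (h x) y)
     \<and> continuous_on II (\<lambda>t. \<Sum>x\<leftarrow>xs. c x * h x t)"
  using assms(1)
proof (induction xs)
  case Nil
  then show ?case by (simp add: Prim_zero)
next
  case (Cons x xs)
  then have cx: "continuous_on II (h x)" and IH: "Prim (\<lambda>t. \<Sum>x\<leftarrow>xs. c x * h x t) y = (\<Sum>x\<leftarrow>xs. c x * Prim (h x) y)"
     "continuous_on II (\<lambda>t. \<Sum>x\<leftarrow>xs. c x * h x t)" by auto
  have "Prim (\<lambda>t. \<Sum>x\<leftarrow>x#xs. c x * h x t) y = Prim (\<lambda>t. c x * h x t) y + Prim (\<lambda>t. \<Sum>x\<leftarrow>xs. c x * h x t) y"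
    by (simp, rule Prim_add[OF _ _ y]) (auto intro!: continuous_intros cx IH)
  also have "\<dots> = (\<Sum>x\<leftarrow>x#xs. c x * Prim (h x) y)"
    using IH Prim_cmult[OF cx y] by simp
  finally show ?case using IH cx by (auto intro!: continuous_intros)
qed

definition good :: "(real \<Rightarrow> real) \<Rightarrow> bool" where
  "good h \<longleftrightarrow> continuous_on II h \<and> h 0 = 0"

definition goodF :: "(real \<Rightarrow> real) \<Rightarrow> bool" where
  "goodF F \<longleftrightarrow> (\<exists>h. good h \<and> (\<forall>y\<in>II. F y = Prim h y))"

lemma goodF_Prim: "good h \<Longrightarrow> goodF (Prim h)"
  unfolding goodF_def by auto

lemma goodF_cont:
  assumes "goodF F" shows "continuous_on II F" "F 0 = 0"
proof -
  obtain h where h: "good h" "\<And>y. y\<in>II \<Longrightarrow> F y = Prim h y" using assms goodF_def by auto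
  have "continuous_on II (Prim h)" using h Prim_deriv_cont good_def by auto
  then show "continuous_on II F" using h(2) continuous_on_cong by (metis (mono_tags, lifting))
  show "F 0 = 0" using h(2)[of 0] by simp
qed


lemma csc_lim:
  assumes "goodF F"
  shows "((\<lambda>t. csc t * F t) \<longlongrightarrow> 0) (at 0)"
proof -
  obtain h where h: "good h" "\<And>y. y\<in>II \<Longrightarrow> F y = Prim h y" using assms goodF_def by auto
  have d: "(Prim h has_real_derivative 0) (at 0)"
    using FTC_I[of h 0] h(1) by (simp add: good_def)
  have l1: "((\<lambda>t. Prim h t / t) \<longlongrightarrow> 0) (at 0)"
    using d[unfolded DERIV_def] by simp
  have l2: "((\<lambda>t::real. sin t / t) \<longlongrightarrow> 1) (at 0)"
    using DERIV_sin[of "0::real", unfolded DERIV_def] by simp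
  have l4: "((\<lambda>t. (Prim h t / t) / (sin t / t)) \<longlongrightarrow> 0) (at 0)"
    using tendsto_divide[OF l1 l2] by simp
  have ev: "eventually (\<lambda>t. t \<in> II) (at 0)"
    by (rule eventually_at_in_open') auto
  have ev2: "eventually (\<lambda>t. t \<noteq> 0) (at (0::real))"
    by (simp add: eventually_at_filter)
  have ev3: "\<forall>\<^sub>F x in at 0. Prim h x / x / (sin x / x) = csc x * F x"
    using ev ev2
  proof eventually_elim
    case (elim t)
    have "sin t \<noteq> 0"
    proof
      assume "sin t = 0"
      then have "t = 0" using elim(1) sin_eq_0_pi[of t] by auto
      then show False using elim(2) by simp
    qed
    then show ?case using elim by (simp add: h(2) csc_def)
  qed
  show ?thesis
    by (rule Lim_transform_eventually[OF l4 ev3])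
qed


lemma good_csc:
  assumes "goodF F" shows "good (\<lambda>t. csc t * F t)"
proof -
  have cF: "continuous_on II F" and F0: "F 0 = 0" using goodF_cont[OF assms] by auto
  have "continuous (at t within II) (\<lambda>t. csc t * F t)" if t: "t \<in> II" for t
  proof (cases "t = 0")
    case True
    have "((\<lambda>t. csc t * F t) \<longlongrightarrow> 0) (at 0 within II)"
      by (rule tendsto_within_subset[OF csc_lim[OF assms]]) simp
    then show ?thesis using True F0 by (simp add: continuous_within)
  next
    case False
    have sn: "sin t \<noteq> 0"
    proof
      assume "sin t = 0"
      then have "t = 0" using t sin_eq_0_pi[of t] by auto
      then show False using False by simp
    qed
    then have "continuous (at t within II) (\<lambda>t. 1 / sin t)"
      by (intro continuous_intros) auto
    moreover have "continuous (at t within II) F"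
      using cF t continuous_on_eq_continuous_within by blast
    ultimately show ?thesis unfolding csc_def using sn by (intro continuous_intros)
  qed
  then show ?thesis unfolding good_def using F0
    by (simp add: continuous_on_eq_continuous_within csc_def)
qed

lemma cos_pos_II: "t \<in> II \<Longrightarrow> cos t > 0"
  by (intro cos_gt_zero_pi) auto

lemma good_cot:
  assumes "goodF F" shows "good (\<lambda>t. cot t * F t)"
proof -
  have "good (\<lambda>t. csc t * F t)" by (rule good_csc[OF assms])
  then have "good (\<lambda>t. cos t * (csc t * F t))"
    unfolding good_def by (auto intro!: continuous_intros)
  moreover have "(\<lambda>t. cos t * (csc t * F t)) = (\<lambda>t. cot t * F t)"
    by (auto simp: cot_def csc_def fun_eq_iff)
  ultimately show ?thesis by simp
qed

lemma cont_tan: "continuous_on II tan"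
  by (rule continuous_at_imp_continuous_on) (auto intro!: continuous_intros dest: cos_pos_II)

lemma cont_sec: "continuous_on II sec"
  unfolding sec_def
  by (rule continuous_at_imp_continuous_on) (auto intro!: continuous_intros dest: cos_pos_II)

lemma good_tan:
  assumes "goodF F" shows "good (\<lambda>t. tan t * F t)"
  using goodF_cont[OF assms] cont_tan unfolding good_def by (auto intro!: continuous_intros)

lemma good_sec:
  assumes "good h" shows "good (\<lambda>t. sec t * h t)"
  using assms cont_sec unfolding good_def by (auto intro!: continuous_intros)



lemma goodF_add: "goodF F \<Longrightarrow> goodF G \<Longrightarrow> goodF (\<lambda>y. F y + G y)"
proof -
  assume "goodF F" "goodF G"
  then obtain f g where f: "good f" "\<forall>y\<in>II. F y = Prim f y" and g: "good g" "\<forall>y\<in>II. G y = Prim g y"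
    unfolding goodF_def by auto
  have "good (\<lambda>t. f t + g t)" using f g unfolding good_def by (auto intro!: continuous_intros)
  moreover have "\<forall>y\<in>II. F y + G y = Prim (\<lambda>t. f t + g t) y"
    using f g Prim_add good_def by auto
  ultimately show ?thesis unfolding goodF_def by blast
qed

lemma goodF_cmult: "goodF F \<Longrightarrow> goodF (\<lambda>y. c * F y)"
proof -
  assume "goodF F"
  then obtain f where f: "good f" "\<forall>y\<in>II. F y = Prim f y"
    unfolding goodF_def by auto
  have "good (\<lambda>t. c * f t)" using f unfolding good_def by (auto intro!: continuous_intros)
  moreover have "\<forall>y\<in>II. c * F y = Prim (\<lambda>t. c * f t) y"
    using f Prim_cmult good_def by auto
  ultimately show ?thesis unfolding goodF_def by blast
qed

lemma goodF_zero: "goodF (\<lambda>y. 0)"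
  unfolding goodF_def good_def
  by (rule exI[of _ "\<lambda>t. 0"]) (auto simp: Prim_zero)

lemma goodF_cong: "goodF F \<Longrightarrow> (\<And>y. y \<in> II \<Longrightarrow> F y = G y) \<Longrightarrow> goodF G"
  unfolding goodF_def by auto

lemma goodF_sum_list: "(\<And>x. x \<in> set xs \<Longrightarrow> goodF (F x)) \<Longrightarrow> goodF (\<lambda>y. \<Sum>x\<leftarrow>xs. c x * F x y)"
proof (induction xs)
  case Nil then show ?case by (simp add: goodF_zero)
next
  case (Cons x xs)
  then show ?case by (simp, intro goodF_add goodF_cmult) auto
qed

fun Cotk :: "nat \<Rightarrow> (real \<Rightarrow> real) \<Rightarrow> real \<Rightarrow> real" where
  "Cotk 0 F = F"
| "Cotk (Suc k) F = Prim (\<lambda>t. cot t * Cotk k F t)"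

lemma goodF_Cotk: "goodF F \<Longrightarrow> goodF (Cotk k F)"
  by (induction k) (auto intro!: goodF_Prim good_cot)

lemma cont_cot_Cotk: "goodF F \<Longrightarrow> continuous_on II (\<lambda>t. cot t * Cotk k F t)"
  using good_cot[OF goodF_Cotk] good_def by blast

lemma Cotk_cong: "(\<And>y. y \<in> II \<Longrightarrow> F y = G y) \<Longrightarrow> y \<in> II \<Longrightarrow> Cotk k F y = Cotk k G y"
proof (induction k arbitrary: y)
  case 0 then show ?case by simp
next
  case (Suc k)
  then show ?case by (auto intro!: Prim_cong)
qed

lemma Cotk_add:
  assumes F: "goodF F" and G: "goodF G"
  shows "y \<in> II \<Longrightarrow> Cotk k (\<lambda>y. F y + G y) y = Cotk k F y + Cotk k G y"
proof (induction k arbitrary: y)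
  case 0 then show ?case by simp
next
  case (Suc k)
  have "Cotk (Suc k) (\<lambda>y. F y + G y) y = Prim (\<lambda>t. cot t * Cotk k F t + cot t * Cotk k G t) y"
    using Suc by (auto intro!: Prim_cong simp: algebra_simps)
  also have "\<dots> = Cotk (Suc k) F y + Cotk (Suc k) G y"
    using Prim_add[OF cont_cot_Cotk[OF F] cont_cot_Cotk[OF G] Suc.prems] by simp
  finally show ?case .
qed

lemma Cotk_cmult:
  assumes F: "goodF F"
  shows "y \<in> II \<Longrightarrow> Cotk k (\<lambda>y. c * F y) y = c * Cotk k F y"
proof (induction k arbitrary: y)
  case 0 then show ?case by simp
next
  case (Suc k)
  have "Cotk (Suc k) (\<lambda>y. c * F y) y = Prim (\<lambda>t. c * (cot t * Cotk k F t)) y"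
    using Suc by (auto intro!: Prim_cong simp: algebra_simps)
  also have "\<dots> = c * Cotk (Suc k) F y"
    using Prim_cmult[OF cont_cot_Cotk[OF F] Suc.prems] by simp
  finally show ?case .
qed

lemma Cotk_zero: "Cotk k (\<lambda>y. 0) = (\<lambda>y. 0)"
  by (induction k) (auto simp: Prim_zero fun_eq_iff)

lemma Cotk_sum_list:
  assumes "\<And>x. x \<in> set xs \<Longrightarrow> goodF (F x)" and y: "y \<in> II"
  shows "Cotk k (\<lambda>y. \<Sum>x\<leftarrow>xs. c x * F x y) y = (\<Sum>x\<leftarrow>xs. c x * Cotk k (F x) y)"
  using assms(1)
proof (induction xs)
  case Nil then show ?case by (simp add: Cotk_zero)
next
  case (Cons x xs)
  have g1: "goodF (\<lambda>y. c x * F x y)" using Cons by (auto intro!: goodF_cmult)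
  have g2: "goodF (\<lambda>y. \<Sum>x\<leftarrow>xs. c x * F x y)" using Cons by (auto intro!: goodF_sum_list)
  have "Cotk k (\<lambda>y. \<Sum>x\<leftarrow>x#xs. c x * F x y) y = Cotk k (\<lambda>y. c x * F x y) y + Cotk k (\<lambda>y. \<Sum>x\<leftarrow>xs. c x * F x y) y"
    using Cotk_add[OF g1 g2 y] by simp
  also have "\<dots> = c x * Cotk k (F x) y + (\<Sum>x\<leftarrow>xs. c x * Cotk k (F x) y)"
    using Cons Cotk_cmult[OF _ y] by auto
  finally show ?case by simp
qed



definition dens :: "letter list \<Rightarrow> real \<Rightarrow> real" where
  "dens w t = hd (forms w) t * iter_int (tl (forms w)) t"

definition gw :: "letter list \<Rightarrow> bool" where
  "gw w \<longleftrightarrow> (\<exists>f fs. forms w = f # fs \<and> forms (Fun sec # w) = (\<lambda>t. sec t * f t) # fs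
              \<and> good (\<lambda>t. f t * iter_int fs t))"

definition QQ :: "lword \<Rightarrow> (real \<Rightarrow> real) \<Rightarrow> bool" where
  "QQ B S \<longleftrightarrow> (\<forall>x\<in>set B. gw (snd x)) \<and> (\<forall>t\<in>II. (\<Sum>x\<leftarrow>B. fst x * dens (snd x) t) = tan t * S t)"

lemma gw_good: "gw w \<Longrightarrow> good (dens w)"
  unfolding gw_def dens_def by auto

lemma gw_iter: "gw w \<Longrightarrow> iter_int (forms w) = Prim (dens w)"
  unfolding gw_def dens_def by (auto simp: iter_int_Cons)

lemma gw_iter_sec: "gw w \<Longrightarrow> iter_int (forms (Fun sec # w)) = Prim (\<lambda>t. sec t * dens w t)"
  unfolding gw_def dens_def by (auto simp: iter_int_Cons mult.assoc)

lemma forms_map_Form: "forms (map Form fs @ w) = fs @ forms w"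
  by (induction fs) auto

lemma iter_int_rep_cot: "iter_int (replicate k cot @ gs) = Cotk k (iter_int gs)"
  by (induction k) (auto simp: iter_int_Cons)

lemma cat_two: "cat [(c1, v1), (c2, v2)] B = map (\<lambda>x. (c1 * fst x, v1 @ snd x)) B @ map (\<lambda>x. (c2 * fst x, v2 @ snd x)) B"
  by (induction B) (auto simp: cat_def)

lemma W_Cons: "W (s1 # r) n = cat (p s1) (W r n)"
  by (simp add: W_def)

lemma iter_int_lw_alt: "iter_int_lw A y = (\<Sum>x\<leftarrow>A. fst x * iter_int (forms (snd x)) y)"
  unfolding iter_int_lw_def by (induction A) auto

lemma cont_a: "continuous_on UNIV (\<lambda>t. a n (sin t))"
  unfolding a_def by (cases "n = 0") (auto intro!: continuous_intros)

lemma QQ_base: "QQ (W [] n) (\<lambda>y. a n (sin y))"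
proof -
  have W0: "W [] n = [(1, [Fun (\<lambda>t. a n (sin t)), Form tan])]" by (simp add: W_def)
  have g: "good (\<lambda>t. a n (sin t) * tan t)"
    unfolding good_def using cont_tan continuous_on_subset[OF cont_a]
    by (auto intro!: continuous_intros)
  have "gw [Fun (\<lambda>t. a n (sin t)), Form tan]"
    unfolding gw_def using g by (auto simp: fun_eq_iff mult.assoc)
  then show ?thesis unfolding QQ_def W0 dens_def by auto
qed



lemma forms_rep: "forms (replicate k (Form f) @ w) = replicate k f @ forms w"
  by (induction k) auto

lemma QQ_step:
  fixes k :: nat
  defines "T \<equiv> Form tan # replicate k (Form cot)"
  assumes Q: "QQ B S" and cS: "continuous_on II S"
    and H: "\<And>y. y \<in> II \<Longrightarrow> Cotk k (\<lambda>y. Prim (\<lambda>t. tan t * S t) y - Prim (\<lambda>t. csc t * Prim (\<lambda>u. sec u * (tan u * S u)) t) y) y = S' y"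
  shows "QQ (cat [(1, T), (-1, T @ [Form csc, Fun sec])] B) S'"
proof -
  define \<Phi>1 where "\<Phi>1 w = Prim (dens w)" for w
  define \<Phi>2 where "\<Phi>2 w = Prim (\<lambda>t. csc t * Prim (\<lambda>u. sec u * dens w u) t)" for w
  define \<Psi> where "\<Psi> w y = \<Phi>1 w y + (-1) * \<Phi>2 w y" for w y
  have TT: "T = map Form (tan # replicate k cot)" unfolding T_def by (simp add: map_replicate)
  have TT2: "T @ [Form csc, Fun sec] @ w = map Form (tan # replicate k cot @ [csc]) @ (Fun sec # w)" for w
    unfolding TT by simp
  have gB: "gw (snd x)" if "x \<in> set B" for x using Q that unfolding QQ_def by auto
  have sumB: "(\<Sum>x\<leftarrow>B. fst x * dens (snd x) t) = tan t * S t" if "t \<in> II" for t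
    using Q that unfolding QQ_def by auto
  have gP1: "goodF (\<Phi>1 w)" if "gw w" for w
    unfolding \<Phi>1_def using that by (intro goodF_Prim gw_good)
  have gsec: "good (\<lambda>u. sec u * dens w u)" if "gw w" for w
    using that by (intro good_sec gw_good)
  have gcsc: "good (\<lambda>t. csc t * Prim (\<lambda>u. sec u * dens w u) t)" if "gw w" for w
    using that by (intro good_csc goodF_Prim gsec)
  have gP2: "goodF (\<Phi>2 w)" if "gw w" for w
    unfolding \<Phi>2_def using that by (intro goodF_Prim gcsc)
  have gPsi: "goodF (\<Psi> w)" if "gw w" for w
    unfolding \<Psi>_def using that by (intro goodF_add goodF_cmult gP1 gP2)
  have f1: "forms (T @ w) = tan # replicate k cot @ forms w" for w
    unfolding TT by (simp add: forms_map_Form forms_rep)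
  have f2: "forms (T @ [Form csc, Fun sec] @ w) = tan # replicate k cot @ csc # forms (Fun sec # w)" for w
    unfolding TT2 by (simp add: forms_map_Form forms_rep)
  have d1: "dens (T @ w) t = tan t * Cotk k (\<Phi>1 w) t" if "gw w" for w t
    unfolding dens_def f1 using that by (simp add: iter_int_rep_cot gw_iter \<Phi>1_def)
  have d2: "dens (T @ [Form csc, Fun sec] @ w) t = tan t * Cotk k (\<Phi>2 w) t" if "gw w" for w t
    unfolding dens_def f2 using that by (simp add: iter_int_rep_cot gw_iter_sec \<Phi>2_def iter_int_Cons)
  have gw1: "gw (T @ w)" if "gw w" for w
  proof -
    have "good (\<lambda>t. tan t * iter_int (replicate k cot @ forms w) t)"
      unfolding iter_int_rep_cot gw_iter[OF that] using gP1[OF that] unfolding \<Phi>1_def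
      by (intro good_tan goodF_Cotk)
    then show ?thesis unfolding gw_def f1 by (simp add: T_def forms_rep)
  qed
  have gw2: "gw (T @ [Form csc, Fun sec] @ w)" if "gw w" for w
  proof -
    have "good (\<lambda>t. tan t * iter_int (replicate k cot @ csc # forms (Fun sec # w)) t)"
      using gP2[OF that] unfolding \<Phi>2_def
      by (simp add: iter_int_rep_cot iter_int_Cons gw_iter_sec[OF that] good_tan goodF_Cotk)
    then show ?thesis unfolding gw_def f2 by (simp add: T_def forms_rep)
  qed
  have cat_eq: "cat [(1, T), (-1, T @ [Form csc, Fun sec])] B =
      map (\<lambda>x. (1 * fst x, T @ snd x)) B @ map (\<lambda>x. (-1 * fst x, (T @ [Form csc, Fun sec]) @ snd x)) B"
    by (rule cat_two)
  show ?thesis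
  proof (unfold QQ_def, intro conjI ballI)
    fix x assume "x \<in> set (cat [(1, T), (-1, T @ [Form csc, Fun sec])] B)"
    then show "gw (snd x)" unfolding cat_eq using gB gw1 gw2 by auto
  next
    fix t assume t: "t \<in> II"
    have "(\<Sum>x\<leftarrow>cat [(1, T), (-1, T @ [Form csc, Fun sec])] B. fst x * dens (snd x) t)
        = (\<Sum>x\<leftarrow>B. fst x * dens (T @ snd x) t) + (\<Sum>x\<leftarrow>B. (- fst x) * dens (T @ [Form csc, Fun sec] @ snd x) t)"
      unfolding cat_eq by (simp add: o_def)
    also have "\<dots> = (\<Sum>x\<leftarrow>B. tan t * (fst x * Cotk k (\<Psi> (snd x)) t))"
    proof -
      have "(\<Sum>x\<leftarrow>B. fst x * dens (T @ snd x) t) + (\<Sum>x\<leftarrow>B. (- fst x) * dens (T @ [Form csc, Fun sec] @ snd x) t)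
          = (\<Sum>x\<leftarrow>B. fst x * dens (T @ snd x) t + (- fst x) * dens (T @ [Form csc, Fun sec] @ snd x) t)"
        by (rule sum_list_addf[symmetric])
      also have "\<dots> = (\<Sum>x\<leftarrow>B. tan t * (fst x * Cotk k (\<Psi> (snd x)) t))"
      proof (rule arg_cong[where f=sum_list], rule map_cong[OF refl])
        fix x assume x: "x \<in> set B"
        have a1: "Cotk k (\<lambda>y. \<Phi>1 (snd x) y + (-1) * \<Phi>2 (snd x) y) t = Cotk k (\<Phi>1 (snd x)) t + Cotk k (\<lambda>y. (-1) * \<Phi>2 (snd x) y) t"
          by (rule Cotk_add[OF gP1[OF gB[OF x]] goodF_cmult[OF gP2[OF gB[OF x]]] t])
        have a2: "Cotk k (\<lambda>y. (-1) * \<Phi>2 (snd x) y) t = (-1) * Cotk k (\<Phi>2 (snd x)) t"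
          by (rule Cotk_cmult[OF gP2[OF gB[OF x]] t])
        have cz: "Cotk k (\<Psi> (snd x)) t = Cotk k (\<Phi>1 (snd x)) t - Cotk k (\<Phi>2 (snd x)) t"
          unfolding \<Psi>_def using a1 a2 by simp
        show "fst x * dens (T @ snd x) t + - fst x * dens (T @ [Form csc, Fun sec] @ snd x) t =
            tan t * (fst x * Cotk k (\<Psi> (snd x)) t)"
          unfolding cz d1[OF gB[OF x]] d2[OF gB[OF x]] by (simp add: algebra_simps)
      qed
      finally show ?thesis .
    qed
    also have "\<dots> = tan t * (\<Sum>x\<leftarrow>B. fst x * Cotk k (\<Psi> (snd x)) t)"
      by (simp add: sum_list_const_mult)
    also have "(\<Sum>x\<leftarrow>B. fst x * Cotk k (\<Psi> (snd x)) t) = Cotk k (\<lambda>y. \<Sum>x\<leftarrow>B. fst x * \<Psi> (snd x) y) t"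
      by (rule Cotk_sum_list[symmetric, OF _ t]) (use gPsi gB in auto)
    also have "\<dots> = Cotk k (\<lambda>y. Prim (\<lambda>t. tan t * S t) y - Prim (\<lambda>t. csc t * Prim (\<lambda>u. sec u * (tan u * S u)) t) y) t"
    proof (rule Cotk_cong[OF _ t])
      fix y assume y: "y \<in> II"
      have e1: "(\<Sum>x\<leftarrow>B. fst x * \<Phi>1 (snd x) y) = Prim (\<lambda>t. tan t * S t) y"
      proof -
        have "(\<Sum>x\<leftarrow>B. fst x * \<Phi>1 (snd x) y) = Prim (\<lambda>t. \<Sum>x\<leftarrow>B. fst x * dens (snd x) t) y"
          unfolding \<Phi>1_def
          by (rule conjunct1[OF Prim_sum_list[OF _ y], symmetric]) (use gw_good gB good_def in auto)
        also have "\<dots> = Prim (\<lambda>t. tan t * S t) y"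
          by (rule Prim_cong[OF _ y]) (simp add: sumB)
        finally show ?thesis .
      qed
      have e2: "(\<Sum>x\<leftarrow>B. fst x * \<Phi>2 (snd x) y) = Prim (\<lambda>t. csc t * Prim (\<lambda>u. sec u * (tan u * S u)) t) y"
      proof -
        have "(\<Sum>x\<leftarrow>B. fst x * \<Phi>2 (snd x) y) = Prim (\<lambda>t. \<Sum>x\<leftarrow>B. fst x * (csc t * Prim (\<lambda>u. sec u * dens (snd x) u) t)) y"
          unfolding \<Phi>2_def
          by (rule conjunct1[OF Prim_sum_list[OF _ y], symmetric]) (use gcsc gB good_def in auto)
        also have "\<dots> = Prim (\<lambda>t. csc t * Prim (\<lambda>u. sec u * (tan u * S u)) t) y"
        proof (rule Prim_cong[OF _ y])
          fix t assume t: "t \<in> II"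
          have "(\<Sum>x\<leftarrow>B. fst x * (csc t * Prim (\<lambda>u. sec u * dens (snd x) u) t))
              = csc t * (\<Sum>x\<leftarrow>B. fst x * Prim (\<lambda>u. sec u * dens (snd x) u) t)"
            by (simp add: sum_list_const_mult[symmetric] algebra_simps)
          also have "(\<Sum>x\<leftarrow>B. fst x * Prim (\<lambda>u. sec u * dens (snd x) u) t)
              = Prim (\<lambda>u. \<Sum>x\<leftarrow>B. fst x * (sec u * dens (snd x) u)) t"
            by (rule conjunct1[OF Prim_sum_list[OF _ t], symmetric]) (use gsec gB good_def in auto)
          also have "\<dots> = Prim (\<lambda>u. sec u * (tan u * S u)) t"
          proof (rule Prim_cong[OF _ t])
            fix u assume u: "u \<in> II"
            have "(\<Sum>x\<leftarrow>B. fst x * (sec u * dens (snd x) u)) = sec u * (\<Sum>x\<leftarrow>B. fst x * dens (snd x) u)"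
              by (simp add: sum_list_const_mult[symmetric] algebra_simps)
            then show "(\<Sum>x\<leftarrow>B. fst x * (sec u * dens (snd x) u)) = sec u * (tan u * S u)"
              using sumB[OF u] by simp
          qed
          finally show "(\<Sum>x\<leftarrow>B. fst x * (csc t * Prim (\<lambda>u. sec u * dens (snd x) u) t)) =
              csc t * Prim (\<lambda>u. sec u * (tan u * S u)) t" .
        qed
        finally show ?thesis .
      qed
      have "(\<Sum>x\<leftarrow>B. fst x * \<Psi> (snd x) y) = (\<Sum>x\<leftarrow>B. fst x * \<Phi>1 (snd x) y) - (\<Sum>x\<leftarrow>B. fst x * \<Phi>2 (snd x) y)"
        unfolding \<Psi>_def by (simp add: algebra_simps sum_list_addf sum_list_subtractf)
      then show "(\<Sum>x\<leftarrow>B. fst x * \<Psi> (snd x) y) =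
          Prim (\<lambda>t. tan t * S t) y - Prim (\<lambda>t. csc t * Prim (\<lambda>u. sec u * (tan u * S u)) t) y"
        using e1 e2 by simp
    qed
    also have "\<dots> = S' t" by (rule H[OF t])
    finally show "(\<Sum>x\<leftarrow>cat [(1, T), (-1, T @ [Form csc, Fun sec])] B. fst x * dens (snd x) t) = tan t * S' t" .
  qed
qed





definition bb :: "nat \<Rightarrow> real" where "bb m = real (2*m choose m) / 4 ^ m"

lemma a_eq: "a m x = bb m * (x^2)^m"
  by (simp add: a_def bb_def power_mult)

lemma bb_0[simp]: "bb 0 = 1" by (simp add: bb_def)

lemma central_aux:
  fixes A B C m :: nat
  assumes e1: "Suc (Suc (2*m)) * B = C * Suc m" and e2: "Suc (2*m) * A = B * Suc m"
  shows "C * Suc m = 2 * (2*m+1) * A"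
proof -
  have "C * Suc m * Suc m = Suc (Suc (2*m)) * (B * Suc m)"
    using e1 by (metis mult.assoc mult.commute)
  also have "\<dots> = Suc (Suc (2*m)) * (Suc (2*m) * A)" using e2 by simp
  also have "\<dots> = (2 * (2*m+1) * A) * Suc m" by simp
  finally have "(C * Suc m) * Suc m = (2 * (2*m+1) * A) * Suc m" .
  then show ?thesis by (simp only: mult_cancel2) simp
qed

lemma central_binom_rec: "(Suc (Suc (2*m)) choose Suc m) * Suc m = 2 * (2*m+1) * (2*m choose m)"
proof (rule central_aux)
  show "Suc (Suc (2*m)) * (Suc (2*m) choose m) = (Suc (Suc (2*m)) choose Suc m) * Suc m"
    by (rule Suc_times_binomial_eq)
  have "Suc (2*m) * (2*m choose m) = (Suc (2*m) choose Suc m) * Suc m"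
    by (rule Suc_times_binomial_eq)
  moreover have "(Suc (2*m) choose Suc m) = (Suc (2*m) choose m)"
    using binomial_symmetric[of "Suc m" "Suc (2*m)"] by simp
  ultimately show "Suc (2*m) * (2*m choose m) = (Suc (2*m) choose m) * Suc m" by simp
qed

lemma bb_rec: "bb (Suc m) * (2 * real (Suc m)) = bb m * (2 * real m + 1)"
proof -
  have e: "real (Suc (Suc (2*m)) choose Suc m) * real (Suc m) = 2 * (2 * real m + 1) * real (2*m choose m)"
    using arg_cong[OF central_binom_rec, of real] by (simp only: of_nat_mult) simp
  have "2 * Suc m = Suc (Suc (2*m))" by simp
  then have "bb (Suc m) = real (Suc (Suc (2*m)) choose Suc m) / 4 ^ Suc m"
    unfolding bb_def by (simp only:)
  then have "bb (Suc m) * (2 * real (Suc m)) = (real (Suc (Suc (2*m)) choose Suc m) * real (Suc m)) * 2 / 4 ^ Suc m"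
    by (simp del: binomial_Suc_Suc of_nat_Suc)
  also have "\<dots> = 2 * (2 * real m + 1) * real (2*m choose m) * 2 / 4 ^ Suc m"
    by (simp only: e)
  also have "\<dots> = bb m * (2 * real m + 1)"
    unfolding bb_def by (simp add: field_simps)
  finally show ?thesis .
qed

lemma bb_nonneg: "bb m \<ge> 0" by (simp add: bb_def)

lemma bb_Suc: "bb (Suc m) = bb m * (2 * real m + 1) / (2 * real m + 2)"
proof -
  have "bb (Suc m) * (2 * real m + 2) = bb m * (2 * real m + 1)"
    using bb_rec[of m] by (simp add: algebra_simps)
  then show ?thesis by (simp add: eq_divide_eq)
qed

lemma bb_le1: "bb m \<le> 1"
proof (induction m)
  case 0 then show ?case by simp
next
  case (Suc m)
  have f: "(2 * real m + 1) / (2 * real m + 2) \<le> 1" by simp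
  have "bb (Suc m) = bb m * ((2 * real m + 1) / (2 * real m + 2))"
    by (simp add: bb_Suc)
  also have "\<dots> \<le> 1 * 1"
    by (rule mult_mono) (use Suc f bb_nonneg in auto)
  finally show ?case by simp
qed

lemma bb_sq: "bb m ^ 2 * (2 * real m + 1) \<le> 1"
proof (induction m)
  case 0 then show ?case by simp
next
  case (Suc m)
  define q where "q = (2 * real m + 1) * (2 * real m + 3) / (2 * real m + 2)^2"
  have q1: "q \<le> 1"
  proof -
    have "(2 * real m + 1) * (2 * real m + 3) \<le> (2 * real m + 2)^2"
      by (simp add: power2_eq_square algebra_simps)
    then show ?thesis unfolding q_def by simp
  qed
  have "bb (Suc m) ^ 2 * (2 * real (Suc m) + 1) = (bb m ^ 2 * (2 * real m + 1)) * q"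
    unfolding bb_Suc q_def by (simp add: power2_eq_square divide_simps)
  also have "\<dots> \<le> 1 * 1"
    by (rule mult_mono) (use Suc q1 in \<open>auto simp: q_def\<close>)
  finally show ?case by simp
qed

lemma a_nonneg: "a m x \<ge> 0"
  by (simp add: a_eq bb_nonneg)

lemma a_zero: "a m 0 = (if m = 0 then 1 else 0)"
  by (simp add: a_eq)




definition psok :: "(nat \<Rightarrow> real) \<Rightarrow> bool" where
  "psok e \<longleftrightarrow> (\<forall>r::real. 0 \<le> r \<longrightarrow> r < 1 \<longrightarrow> summable (\<lambda>m. \<bar>e m\<bar> * r^m))"

definition ps :: "(nat \<Rightarrow> real) \<Rightarrow> real \<Rightarrow> real" where
  "ps e u = (\<Sum>m. e m * u^m)"

lemma psok_abs_summable:
  assumes "psok e" "\<bar>z\<bar> < 1" shows "summable (\<lambda>m. \<bar>e m * z^m\<bar>)"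
proof -
  have "summable (\<lambda>m. \<bar>e m\<bar> * \<bar>z\<bar>^m)" using assms unfolding psok_def by auto
  then show ?thesis by (simp add: abs_mult power_abs)
qed

lemma psok_summable:
  assumes "psok e" "\<bar>z\<bar> < 1" shows "summable (\<lambda>m. e m * z^m)"
  by (rule summable_rabs_cancel[OF psok_abs_summable[OF assms]])

lemma psok_le:
  assumes "psok e" "0 \<le> C" "\<And>m. \<bar>e' m\<bar> \<le> C * \<bar>e m\<bar>" shows "psok e'"
  unfolding psok_def
proof (intro allI impI)
  fix r :: real assume r: "0 \<le> r" "r < 1"
  have "summable (\<lambda>m. C * (\<bar>e m\<bar> * r^m))"
    using assms(1) r unfolding psok_def by (intro summable_mult) auto
  then show "summable (\<lambda>m. \<bar>e' m\<bar> * r^m)"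
    by (rule summable_comparison_test') (use assms(3) r in \<open>auto intro!: mult_right_mono simp: mult.assoc[symmetric]\<close>)
qed

lemma psok_diffs:
  assumes "psok e" shows "psok (diffs e)"
  unfolding psok_def
proof (intro allI impI)
  fix r :: real assume r: "0 \<le> r" "r < 1"
  have pa: "psok (\<lambda>m. \<bar>e m\<bar>)" using assms by (simp add: psok_def)
  have "summable (\<lambda>m. diffs (\<lambda>m. \<bar>e m\<bar>) m * r^m)"
    by (rule termdiff_converges[of r 1]) (use r psok_summable[OF pa] in auto)
  moreover have "diffs (\<lambda>m. \<bar>e m\<bar>) m = \<bar>diffs e m\<bar>" for m
    by (simp add: diffs_def abs_mult)
  ultimately show "summable (\<lambda>m. \<bar>diffs e m\<bar> * r^m)" by simp
qed

lemma psok_const: "psok (\<lambda>m. 1)"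
  unfolding psok_def by (auto intro!: summable_geometric)

lemma psok_bounded:
  assumes "\<And>m. \<bar>e m\<bar> \<le> M" shows "psok e"
proof (rule psok_le[OF psok_const])
  show "0 \<le> M" using assms[of 0] by simp
  show "\<bar>e m\<bar> \<le> M * \<bar>1\<bar>" for m using assms[of m] by simp
qed

lemma psok_lin:
  assumes "\<And>m. \<bar>e m\<bar> \<le> M * (real m + 1)" shows "psok e"
proof (rule psok_le[OF psok_diffs[OF psok_const]])
  show "0 \<le> M" using assms[of 0] by simp
  show "\<bar>e m\<bar> \<le> M * \<bar>diffs (\<lambda>m. 1) m\<bar>" for m using assms[of m] by (simp add: diffs_def add_ac)
qed

lemma ps_sums: "psok e \<Longrightarrow> \<bar>u\<bar> < 1 \<Longrightarrow> (\<lambda>m. e m * u^m) sums ps e u"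
  unfolding ps_def by (intro summable_sums psok_summable)

lemma ps_deriv:
  assumes "psok e" "\<bar>u\<bar> < 1"
  shows "(ps e has_real_derivative ps (diffs e) u) (at u)"
proof -
  have "((\<lambda>z. \<Sum>n. e n * z^n) has_field_derivative (\<Sum>n. diffs e n * u^n)) (at u)"
    by (rule termdiffs_strong'[of 1]) (use assms psok_summable in auto)
  then show ?thesis unfolding ps_def[abs_def] .
qed

lemma ps_zero: "ps e 0 = e 0"
  unfolding ps_def by simp

lemma ps_shift_sums:
  assumes "psok e" "\<bar>u\<bar> < 1"
  shows "(\<lambda>m. real m * e m * u^m) sums (u * ps (diffs e) u)"
proof -
  have "(\<lambda>j. diffs e j * u^j) sums ps (diffs e) u"
    by (rule ps_sums[OF psok_diffs[OF assms(1)] assms(2)])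
  then have "(\<lambda>j. diffs e j * u^j * u) sums (ps (diffs e) u * u)"
    by (rule sums_mult2)
  then have "(\<lambda>j. real (Suc j) * e (Suc j) * u^(Suc j)) sums (u * ps (diffs e) u)"
    by (simp add: diffs_def algebra_simps)
  then show ?thesis using sums_Suc_iff[where f="\<lambda>m. real m * e m * u^m"] by simp
qed

lemma ode_ps:
  fixes c :: "nat \<Rightarrow> real"
  defines "P \<equiv> \<lambda>m. \<Sum>k<m. c k"
  defines "\<sigma> \<equiv> \<lambda>m. c m * bb m"
  defines "\<nu> \<equiv> \<lambda>m. P m * bb m"
  assumes ps1: "psok \<sigma>" and ps2: "psok \<nu>" and u: "\<bar>u\<bar> < 1"
  shows "2 * (1 - u) * ps (diffs \<nu>) u = ps \<sigma> u + ps \<nu> u + 2 * u * ps (diffs \<sigma>) u"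
proof -
  have s1: "(\<lambda>j. diffs \<nu> j * u^j) sums ps (diffs \<nu>) u" by (rule ps_sums[OF psok_diffs[OF ps2] u])
  have s2: "(\<lambda>j. real j * \<nu> j * u^j) sums (u * ps (diffs \<nu>) u)" by (rule ps_shift_sums[OF ps2 u])
  have s3: "(\<lambda>j. \<sigma> j * u^j) sums ps \<sigma> u" by (rule ps_sums[OF ps1 u])
  have s4: "(\<lambda>j. \<nu> j * u^j) sums ps \<nu> u" by (rule ps_sums[OF ps2 u])
  have s5: "(\<lambda>j. real j * \<sigma> j * u^j) sums (u * ps (diffs \<sigma>) u)" by (rule ps_shift_sums[OF ps1 u])
  have comb: "(\<lambda>j. 2 * (diffs \<nu> j * u^j) - 2 * (real j * \<nu> j * u^j) - \<sigma> j * u^j - \<nu> j * u^j - 2 * (real j * \<sigma> j * u^j))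
     sums (2 * ps (diffs \<nu>) u - 2 * (u * ps (diffs \<nu>) u) - ps \<sigma> u - ps \<nu> u - 2 * (u * ps (diffs \<sigma>) u))"
    by (intro sums_diff sums_mult s1 s2 s3 s4 s5)
  have coef: "2 * (diffs \<nu> j * u^j) - 2 * (real j * \<nu> j * u^j) - \<sigma> j * u^j - \<nu> j * u^j - 2 * (real j * \<sigma> j * u^j) = 0" for j
  proof -
    have PS: "P (Suc j) = P j + c j" unfolding P_def by simp
    have "2 * diffs \<nu> j = (bb (Suc j) * (2 * real (Suc j))) * P (Suc j)"
      unfolding diffs_def \<nu>_def by (simp add: algebra_simps)
    also have "\<dots> = bb j * (2 * real j + 1) * (P j + c j)" by (simp only: bb_rec PS)
    finally have "2 * diffs \<nu> j = bb j * (2 * real j + 1) * (P j + c j)" .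
    then have z: "2 * diffs \<nu> j - 2 * real j * \<nu> j - \<sigma> j - \<nu> j - 2 * real j * \<sigma> j = 0"
      unfolding \<nu>_def \<sigma>_def by (simp add: algebra_simps)
    have "2 * (diffs \<nu> j * u^j) - 2 * (real j * \<nu> j * u^j) - \<sigma> j * u^j - \<nu> j * u^j - 2 * (real j * \<sigma> j * u^j)
       = (2 * diffs \<nu> j - 2 * real j * \<nu> j - \<sigma> j - \<nu> j - 2 * real j * \<sigma> j) * u^j"
      by (simp add: algebra_simps)
    then show ?thesis using z by simp
  qed
  have "(\<lambda>j. 0) sums (2 * ps (diffs \<nu>) u - 2 * (u * ps (diffs \<nu>) u) - ps \<sigma> u - ps \<nu> u - 2 * (u * ps (diffs \<sigma>) u))"
    using comb coef by simp
  then have "2 * ps (diffs \<nu>) u - 2 * (u * ps (diffs \<nu>) u) - ps \<sigma> u - ps \<nu> u - 2 * (u * ps (diffs \<sigma>) u) = 0"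
    using sums_zero sums_unique2 by blast
  then show ?thesis by (simp add: algebra_simps)
qed




definition Sf :: "(nat \<Rightarrow> real) \<Rightarrow> real \<Rightarrow> real" where
  "Sf c y = ps (\<lambda>m. c m * bb m) ((sin y)^2)"

lemma sin2_II: "y \<in> II \<Longrightarrow> \<bar>(sin y)^2\<bar> < 1"
proof -
  assume "y \<in> II"
  then have "cos y > 0" by (rule cos_pos_II)
  then have c2: "(cos y)^2 > 0" by simp
  have "(sin y)^2 = 1 - (cos y)^2" using sin_cos_squared_add[of y] by linarith
  then have "(sin y)^2 < 1" using c2 by linarith
  then show ?thesis by simp
qed

lemma Sf_zero: "Sf c 0 = c 0"
  by (simp add: Sf_def ps_zero)

lemma Sf_deriv:
  assumes ok: "psok (\<lambda>m. c m * bb m)" and y: "y \<in> II"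
  shows "(Sf c has_real_derivative (2 * sin y * cos y * ps (diffs (\<lambda>m. c m * bb m)) ((sin y)^2))) (at y)"
proof -
  have d1: "(ps (\<lambda>m. c m * bb m) has_real_derivative ps (diffs (\<lambda>m. c m * bb m)) ((sin y)^2)) (at ((sin y)^2))"
    by (rule ps_deriv[OF ok sin2_II[OF y]])
  have d2: "((\<lambda>y. (sin y)^2) has_real_derivative 2 * sin y * cos y) (at y)"
    by (auto intro!: derivative_eq_intros simp: power2_eq_square)
  have "((\<lambda>y. ps (\<lambda>m. c m * bb m) ((sin y)^2)) has_real_derivative
      ps (diffs (\<lambda>m. c m * bb m)) ((sin y)^2) * (2 * sin y * cos y)) (at y)"
    by (rule DERIV_chain2[OF d1 d2])
  then show ?thesis unfolding Sf_def[abs_def] by (simp add: algebra_simps)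
qed

lemma Sf_cont:
  assumes ok: "psok (\<lambda>m. c m * bb m)" shows "continuous_on II (Sf c)"
  by (rule continuous_at_imp_continuous_on) (use Sf_deriv[OF ok] DERIV_isCont in blast)

lemma Sf_cot_deriv:
  assumes ok: "psok (\<lambda>m. d m * bb m)" and d0: "d 0 = 0" and y: "y \<in> II"
  shows "psok (\<lambda>m. d m / (2 * real m) * bb m)"
    and "(Sf (\<lambda>m. d m / (2 * real m)) has_real_derivative cot y * Sf d y) (at y)"
proof -
  show ok': "psok (\<lambda>m. d m / (2 * real m) * bb m)"
  proof (rule psok_le[OF ok])
    show "\<bar>d m / (2 * real m) * bb m\<bar> \<le> 1 * \<bar>d m * bb m\<bar>" for m
    proof (cases "m = 0")
      case True then show ?thesis by simp
    next
      case False
      then have "2 * real m \<ge> 1" by simp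
      then have "1 * (\<bar>bb m\<bar> * \<bar>d m\<bar>) \<le> (2 * real m) * (\<bar>bb m\<bar> * \<bar>d m\<bar>)"
        by (intro mult_right_mono) auto
      then show ?thesis using False by (simp add: abs_mult field_simps)
    qed
  qed simp
  define e where "e = (\<lambda>m. d m / (2 * real m) * bb m)"
  define u where "u = (sin y)^2"
  have u: "\<bar>u\<bar> < 1" unfolding u_def by (rule sin2_II[OF y])
  define X where "X = ps (diffs e) u"
  have s1: "(\<lambda>j. diffs e j * u^j) sums X" unfolding X_def e_def by (rule ps_sums[OF psok_diffs[OF ok'] u])
  have "(\<lambda>j. 2 * u * (diffs e j * u^j)) sums (2 * u * X)" by (rule sums_mult[OF s1])
  moreover have "2 * u * (diffs e j * u^j) = d (Suc j) * bb (Suc j) * u^(Suc j)" for j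
    unfolding e_def diffs_def by (simp add: field_simps)
  ultimately have "(\<lambda>j. d (Suc j) * bb (Suc j) * u^(Suc j)) sums (2 * u * X)" by simp
  then have "(\<lambda>m. d m * bb m * u^m) sums (2 * u * X)"
    using sums_Suc_iff[where f="\<lambda>m. d m * bb m * u^m"] d0 by simp
  then have SfX: "Sf d y = 2 * u * X"
    unfolding Sf_def ps_def u_def[symmetric] by (simp add: sums_iff)
  have "(Sf (\<lambda>m. d m / (2 * real m)) has_real_derivative (2 * sin y * cos y * X)) (at y)"
    using Sf_deriv[OF ok' y] unfolding X_def e_def u_def .
  moreover have "2 * sin y * cos y * X = cot y * Sf d y"
  proof (cases "sin y = 0")
    case True then show ?thesis by (simp add: SfX u_def)
  next
    case False then show ?thesis by (simp add: SfX u_def cot_def field_simps power2_eq_square)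
  qed
  ultimately show "(Sf (\<lambda>m. d m / (2 * real m)) has_real_derivative cot y * Sf d y) (at y)" by simp
qed

lemma alg_id:
  fixes s co A B Sv Vv :: real
  assumes co: "co \<noteq> 0" and pyth: "co^2 = 1 - s^2"
    and ode: "2 * (1 - s^2) * B = Sv + Vv + 2 * s^2 * A"
  shows "((2 * s * co) * co - s^2 * (- s)) / (co * co) * Sv + (2 * s * co * A) * (s^2 / co)
         - ((- s) * Vv + (2 * s * co * B) * co) = 1 / co * (s / co * Sv)"
proof -
  have "2 * s * co * B * co = s * (2 * co^2 * B)" by (simp add: power2_eq_square algebra_simps)
  also have "\<dots> = s * (2 * (1 - s^2) * B)" by (simp only: pyth)
  also have "\<dots> = s * (Sv + Vv + 2 * s^2 * A)" by (simp only: ode)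
  finally have e1: "2 * s * co * B * co = s * (Sv + Vv + 2 * s^2 * A)" .
  have "((2 * s * co) * co - s^2 * (- s)) / (co * co) * Sv = (2 * s * co^2 + s^3) / co^2 * Sv"
    by (simp add: power2_eq_square power3_eq_cube algebra_simps)
  also have "\<dots> = (2 * s + s^3 / co^2) * Sv" using co by (simp add: field_simps power2_eq_square)
  finally have e2: "((2 * s * co) * co - s^2 * (- s)) / (co * co) * Sv = (2 * s + s^3 / co^2) * Sv" .
  have e3: "(2 * s * co * A) * (s^2 / co) = 2 * s^3 * A" using co by (simp add: field_simps power2_eq_square power3_eq_cube)
  have e4: "1 / co * (s / co * Sv) = s / co^2 * Sv" by (simp add: power2_eq_square)
  have e5: "s / co^2 = s + s^3 / co^2"
  proof -
    have "s * co^2 + s^3 = s * (co^2 + s^2)" by (simp add: power2_eq_square power3_eq_cube algebra_simps)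
    also have "co^2 + s^2 = 1" using pyth by simp
    finally have "s = s * co^2 + s^3" by simp
    then have "s / co^2 = (s * co^2 + s^3) / co^2" by simp
    also have "\<dots> = s + s^3 / co^2" using co by (simp add: field_simps)
    finally show ?thesis .
  qed
  show ?thesis
    unfolding e2 e3 e4 e5 using e1 by (simp add: algebra_simps power2_eq_square power3_eq_cube)
qed




lemma Jhat_deriv:
  fixes c :: "nat \<Rightarrow> real"
  defines "P \<equiv> \<lambda>m. \<Sum>k<m. c k"
  assumes ok1: "psok (\<lambda>m. c m * bb m)" and ok2: "psok (\<lambda>m. P m * bb m)" and y: "y \<in> II"
  shows "((\<lambda>y. (sin y)^2 / cos y * Sf c y - cos y * Sf P y) has_real_derivative sec y * (tan y * Sf c y)) (at y)"
proof -
  define s where "s = sin y"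
  define co where "co = cos y"
  define u where "u = (sin y)^2"
  define A where "A = ps (diffs (\<lambda>m. c m * bb m)) u"
  define B where "B = ps (diffs (\<lambda>m. P m * bb m)) u"
  have co0: "co \<noteq> 0" unfolding co_def using cos_pos_II[OF y] by simp
  have dS: "(Sf c has_real_derivative 2 * s * co * A) (at y)"
    using Sf_deriv[OF ok1 y] unfolding s_def co_def A_def u_def .
  have dV: "(Sf P has_real_derivative 2 * s * co * B) (at y)"
    using Sf_deriv[OF ok2 y] unfolding s_def co_def B_def u_def .
  have d2: "((\<lambda>y. (sin y)^2) has_real_derivative 2 * s * co) (at y)"
    unfolding s_def co_def by (auto intro!: derivative_eq_intros simp: power2_eq_square)
  have dq: "((\<lambda>y. (sin y)^2 / cos y) has_real_derivative ((2 * s * co) * co - s^2 * (- s)) / (co * co)) (at y)"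
    using DERIV_divide[OF d2 DERIV_cos[of y]] co0 unfolding s_def co_def by simp
  have dqS: "((\<lambda>y. (sin y)^2 / cos y * Sf c y) has_real_derivative
      ((2 * s * co) * co - s^2 * (- s)) / (co * co) * Sf c y + (2 * s * co * A) * (s^2 / co)) (at y)"
    using DERIV_mult[OF dq dS] unfolding s_def co_def by simp
  have dcV: "((\<lambda>y. cos y * Sf P y) has_real_derivative (- s) * Sf P y + (2 * s * co * B) * co) (at y)"
    using DERIV_mult[OF DERIV_cos[of y] dV] unfolding s_def co_def by simp
  have tot: "((\<lambda>y. (sin y)^2 / cos y * Sf c y - cos y * Sf P y) has_real_derivative
      ((2 * s * co) * co - s^2 * (- s)) / (co * co) * Sf c y + (2 * s * co * A) * (s^2 / co)
         - ((- s) * Sf P y + (2 * s * co * B) * co)) (at y)"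
    by (rule DERIV_diff[OF dqS dcV])
  have u1: "\<bar>u\<bar> < 1" unfolding u_def by (rule sin2_II[OF y])
  have ode: "2 * (1 - s^2) * B = Sf c y + Sf P y + 2 * s^2 * A"
    using ode_ps[of c u, OF _ _ u1] ok1 ok2 unfolding A_def B_def Sf_def u_def s_def P_def by simp
  have pyth: "co^2 = 1 - s^2" unfolding co_def s_def by (simp add: cos_squared_eq)
  have "((2 * s * co) * co - s^2 * (- s)) / (co * co) * Sf c y + (2 * s * co * A) * (s^2 / co)
         - ((- s) * Sf P y + (2 * s * co * B) * co) = 1 / co * (s / co * Sf c y)"
    by (rule alg_id[OF co0 pyth ode])
  also have "\<dots> = sec y * (tan y * Sf c y)"
    unfolding sec_def tan_def s_def co_def by simp
  finally show ?thesis using tot by simp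
qed

lemma csc_Jhat: "csc t * ((sin t)^2 / cos t * S - cos t * V) = tan t * S - cot t * V"
proof (cases "sin t = 0")
  case True then show ?thesis by (simp add: csc_def tan_def cot_def)
next
  case False then show ?thesis by (simp add: csc_def tan_def cot_def field_simps power2_eq_square)
qed

lemma K_eq:
  fixes c :: "nat \<Rightarrow> real"
  defines "P \<equiv> \<lambda>m. \<Sum>k<m. c k"
  assumes ok1: "psok (\<lambda>m. c m * bb m)" and ok2: "psok (\<lambda>m. P m * bb m)"
  shows "goodF (\<lambda>y. Prim (\<lambda>t. tan t * Sf c t) y - Prim (\<lambda>t. csc t * Prim (\<lambda>u. sec u * (tan u * Sf c u)) t) y)"
    and "\<And>y. y \<in> II \<Longrightarrow> Prim (\<lambda>t. tan t * Sf c t) y - Prim (\<lambda>t. csc t * Prim (\<lambda>u. sec u * (tan u * Sf c u)) t) y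
            = Sf (\<lambda>m. P m / (2 * real m)) y"
proof -
  have cS: "continuous_on II (Sf c)" by (rule Sf_cont[OF ok1])
  have gtS: "good (\<lambda>t. tan t * Sf c t)"
    unfolding good_def using cS cont_tan by (auto intro!: continuous_intros)
  have g1: "good (\<lambda>u. sec u * (tan u * Sf c u))"
    by (rule good_sec[OF gtS])
  define J where "J y = (sin y)^2 / cos y * Sf c y - cos y * Sf P y" for y
  have J0: "J 0 = 0" unfolding J_def by (simp add: Sf_zero P_def)
  have PJ: "Prim (\<lambda>u. sec u * (tan u * Sf c u)) y = J y" if y: "y \<in> II" for y
  proof -
    have "Prim (\<lambda>u. sec u * (tan u * Sf c u)) y = J y - J 0"
      by (rule LB_eq[OF _ _ y]) (use g1 good_def Jhat_deriv[OF ok1 ok2[unfolded P_def]] in \<open>auto simp: J_def P_def\<close>)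
    then show ?thesis using J0 by simp
  qed
  have g2: "good (\<lambda>t. csc t * Prim (\<lambda>u. sec u * (tan u * Sf c u)) t)"
    by (rule good_csc[OF goodF_Prim[OF g1]])
  define h where "h t = tan t * Sf c t - cot t * Sf P t" for t
  have hcsc: "csc t * Prim (\<lambda>u. sec u * (tan u * Sf c u)) t = h t" if "t \<in> II" for t
    unfolding PJ[OF that] J_def h_def by (rule csc_Jhat)
  have ch0: "continuous_on II (\<lambda>t. csc t * Prim (\<lambda>u. sec u * (tan u * Sf c u)) t)"
    using g2 unfolding good_def by blast
  have ch: "continuous_on II h"
    by (rule continuous_on_eq[OF ch0 hcsc])
  define U where "U = Sf (\<lambda>m. P m / (2 * real m))"
  have P0: "P 0 = 0" unfolding P_def by simp
  have dU: "(U has_real_derivative cot y * Sf P y) (at y)" if "y \<in> II" for y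
    unfolding U_def by (rule Sf_cot_deriv(2)[OF ok2 P0 that])
  have U0: "U 0 = 0" unfolding U_def by (simp add: Sf_zero P0)
  have Ph: "Prim h y = Prim (\<lambda>t. tan t * Sf c t) y - U y" if y: "y \<in> II" for y
  proof -
    have "Prim h y = (\<lambda>y. Prim (\<lambda>t. tan t * Sf c t) y - U y) y - (\<lambda>y. Prim (\<lambda>t. tan t * Sf c t) y - U y) 0"
    proof (rule LB_eq[OF ch _ y])
      fix x assume x: "x \<in> II"
      show "((\<lambda>y. Prim (\<lambda>t. tan t * Sf c t) y - U y) has_real_derivative h x) (at x)"
        using DERIV_diff[OF FTC_I[OF _ x] dU[OF x]] gtS unfolding good_def h_def by simp
    qed
    then show ?thesis using U0 by simp
  qed
  have main: "Prim (\<lambda>t. tan t * Sf c t) y - Prim (\<lambda>t. csc t * Prim (\<lambda>u. sec u * (tan u * Sf c u)) t) y = U y"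
    if y: "y \<in> II" for y
  proof -
    have "Prim (\<lambda>t. csc t * Prim (\<lambda>u. sec u * (tan u * Sf c u)) t) y = Prim h y"
      by (rule Prim_cong[OF hcsc y])
    then show ?thesis using Ph[OF y] by simp
  qed
  then show "\<And>y. y \<in> II \<Longrightarrow> Prim (\<lambda>t. tan t * Sf c t) y - Prim (\<lambda>t. csc t * Prim (\<lambda>u. sec u * (tan u * Sf c u)) t) y
            = Sf (\<lambda>m. P m / (2 * real m)) y" unfolding U_def by blast
  show "goodF (\<lambda>y. Prim (\<lambda>t. tan t * Sf c t) y - Prim (\<lambda>t. csc t * Prim (\<lambda>u. sec u * (tan u * Sf c u)) t) y)"
    using goodF_add[OF goodF_Prim[OF gtS] goodF_cmult[OF goodF_Prim[OF g2], of "-1"]] by simp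
qed




lemma Cotk_U:
  assumes ok: "psok (\<lambda>m. P m * bb m)" and P0: "P 0 = 0"
    and gU: "goodF (Sf (\<lambda>m. P m / (2 * real m)))"
  shows "y \<in> II \<Longrightarrow> Cotk k (Sf (\<lambda>m. P m / (2 * real m))) y = Sf (\<lambda>m. P m / (2 * real m)^(Suc k)) y"
proof (induction k arbitrary: y)
  case 0 then show ?case by simp
next
  case (Suc k)
  define Dk where "Dk = (\<lambda>m. P m / (2 * real m)^(Suc k))"
  have okD: "psok (\<lambda>m. Dk m * bb m)"
  proof (rule psok_le[OF ok])
    show "\<bar>Dk m * bb m\<bar> \<le> 1 * \<bar>P m * bb m\<bar>" for m
    proof (cases "m = 0")
      case True then show ?thesis by (simp add: Dk_def)
    next
      case False
      then have ge1: "(2 * real m)^(Suc k) \<ge> 1" by (intro one_le_power) simp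
      have "\<bar>P m\<bar> / (2 * real m)^(Suc k) \<le> \<bar>P m\<bar> / 1"
        by (rule divide_left_mono[OF ge1]) (use False in auto)
      then have "\<bar>P m\<bar> / (2 * real m)^(Suc k) \<le> \<bar>P m\<bar>" by simp
      then have "\<bar>P m\<bar> / (2 * real m)^(Suc k) * \<bar>bb m\<bar> \<le> \<bar>P m\<bar> * \<bar>bb m\<bar>"
        by (rule mult_right_mono) simp
      then show ?thesis unfolding Dk_def by (simp add: abs_mult abs_divide)
    qed
  qed simp
  have D0: "Dk 0 = 0" by (simp add: Dk_def P0)
  have DD: "(\<lambda>m. Dk m / (2 * real m)) = (\<lambda>m. P m / (2 * real m)^(Suc (Suc k)))"
    unfolding Dk_def by (simp add: fun_eq_iff)
  have cont0: "continuous_on II (\<lambda>t. cot t * Cotk k (Sf (\<lambda>m. P m / (2 * real m))) t)"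
    by (rule cont_cot_Cotk[OF gU])
  have cont: "continuous_on II (\<lambda>t. cot t * Sf Dk t)"
    by (rule continuous_on_eq[OF cont0]) (simp add: Suc.IH Dk_def)
  have "Cotk (Suc k) (Sf (\<lambda>m. P m / (2 * real m))) y = Prim (\<lambda>t. cot t * Sf Dk t) y"
    by (simp, rule Prim_cong[OF _ Suc.prems]) (simp add: Suc.IH Dk_def)
  also have "\<dots> = Sf (\<lambda>m. Dk m / (2 * real m)) y - Sf (\<lambda>m. Dk m / (2 * real m)) 0"
    by (rule LB_eq[OF cont _ Suc.prems]) (rule Sf_cot_deriv(2)[OF okD D0])
  also have "\<dots> = Sf (\<lambda>m. P m / (2 * real m)^(Suc (Suc k))) y"
    unfolding DD by (simp add: Sf_zero)
  finally show ?case .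
qed

fun CC :: "nat \<Rightarrow> nat list \<Rightarrow> nat \<Rightarrow> real" where
  "CC n [] m = (if m = n then 1 else 0)"
| "CC n (s1 # r) m = (\<Sum>k<m. CC n r k) / (2 * real m) ^ s1"

lemma CC_bounds: "(\<forall>j\<in>set s. 1 \<le> j) \<Longrightarrow> 0 \<le> CC n s m \<and> CC n s m \<le> 1"
proof (induction s arbitrary: m)
  case Nil then show ?case by simp
next
  case (Cons s1 r)
  then have IH: "\<And>k. 0 \<le> CC n r k \<and> CC n r k \<le> 1" and s1: "1 \<le> s1" by auto
  have sum0: "0 \<le> (\<Sum>k<m. CC n r k)" using IH by (simp add: sum_nonneg)
  have sumle: "(\<Sum>k<m. CC n r k) \<le> real m"
    using sum_mono[of "{..<m}" "\<lambda>k. CC n r k" "\<lambda>k. 1"] IH by simp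
  have le: "CC n (s1 # r) m \<le> 1"
  proof (cases "m = 0")
    case True then show ?thesis by simp
  next
    case False
    have "2 * real m \<le> (2 * real m) ^ s1"
      using power_increasing[OF s1, of "2 * real m"] False by simp
    then have "(\<Sum>k<m. CC n r k) / (2 * real m) ^ s1 \<le> real m / (2 * real m)"
      using sum0 sumle False by (intro frac_le) auto
    also have "\<dots> \<le> 1" using False by simp
    finally show ?thesis by simp
  qed
  moreover have "0 \<le> CC n (s1 # r) m" using sum0 by simp
  ultimately show ?case by simp
qed




lemma Sf_base: "Sf (CC n []) = (\<lambda>y. a n (sin y))"
proof
  fix y
  have "(\<lambda>m. if m = n then bb n * ((sin y)^2)^n else 0) sums (bb n * ((sin y)^2)^n)"
    by (rule sums_single)
  moreover have "(\<lambda>m. CC n [] m * bb m * ((sin y)^2)^m) = (\<lambda>m. if m = n then bb n * ((sin y)^2)^n else 0)"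
    by auto
  ultimately show "Sf (CC n []) y = a n (sin y)"
    unfolding Sf_def ps_def a_eq by (simp add: sums_iff)
qed

lemma psok_CC: "(\<forall>j\<in>set s. 1 \<le> j) \<Longrightarrow> psok (\<lambda>m. CC n s m * bb m)"
proof (rule psok_bounded)
  fix m assume "\<forall>j\<in>set s. 1 \<le> j"
  then have "0 \<le> CC n s m" "CC n s m \<le> 1" using CC_bounds by auto
  then show "\<bar>CC n s m * bb m\<bar> \<le> 1"
    using bb_nonneg[of m] bb_le1[of m] by (simp add: abs_mult mult_le_one)
qed

lemma psok_PCC: "(\<forall>j\<in>set s. 1 \<le> j) \<Longrightarrow> psok (\<lambda>m. (\<Sum>k<m. CC n s k) * bb m)"
proof (rule psok_lin)
  fix m assume s: "\<forall>j\<in>set s. 1 \<le> j"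
  have b: "\<And>k. 0 \<le> CC n s k \<and> CC n s k \<le> 1" using CC_bounds[OF s] by auto
  have s0: "0 \<le> (\<Sum>k<m. CC n s k)" using b by (simp add: sum_nonneg)
  have sl: "(\<Sum>k<m. CC n s k) \<le> real m"
    using sum_mono[of "{..<m}" "\<lambda>k. CC n s k" "\<lambda>k. 1"] b by simp
  have "\<bar>(\<Sum>k<m. CC n s k) * bb m\<bar> \<le> real m * 1"
    unfolding abs_mult using s0 sl bb_nonneg[of m] bb_le1[of m] by (intro mult_mono) auto
  then show "\<bar>(\<Sum>k<m. CC n s k) * bb m\<bar> \<le> 1 * (real m + 1)" by simp
qed

lemma QQ_all: "(\<forall>j\<in>set s. 1 \<le> j) \<Longrightarrow> QQ (W s n) (Sf (CC n s))"
proof (induction s)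
  case Nil then show ?case by (subst Sf_base) (rule QQ_base)
next
  case (Cons s1 r)
  then have r: "\<forall>j\<in>set r. 1 \<le> j" and s1: "1 \<le> s1" by auto
  define k where "k = s1 - 1"
  have sk: "s1 = Suc k" using s1 k_def by simp
  define P where "P = (\<lambda>m. \<Sum>k<m. CC n r k)"
  have ok1: "psok (\<lambda>m. CC n r m * bb m)" by (rule psok_CC[OF r])
  have ok2: "psok (\<lambda>m. P m * bb m)" unfolding P_def by (rule psok_PCC[OF r])
  have P0: "P 0 = 0" by (simp add: P_def)
  note KE = K_eq[OF ok1 ok2[unfolded P_def]]
  have gU: "goodF (Sf (\<lambda>m. P m / (2 * real m)))"
    by (rule goodF_cong[OF KE(1)]) (use KE(2) P_def in auto)
  have H: "Cotk k (\<lambda>y. Prim (\<lambda>t. tan t * Sf (CC n r) t) y - Prim (\<lambda>t. csc t * Prim (\<lambda>u. sec u * (tan u * Sf (CC n r) u)) t) y) y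
      = Sf (CC n (s1 # r)) y" if y: "y \<in> II" for y
  proof -
    have "Cotk k (\<lambda>y. Prim (\<lambda>t. tan t * Sf (CC n r) t) y - Prim (\<lambda>t. csc t * Prim (\<lambda>u. sec u * (tan u * Sf (CC n r) u)) t) y) y
        = Cotk k (Sf (\<lambda>m. P m / (2 * real m))) y"
      by (rule Cotk_cong[OF _ y]) (use KE(2) P_def in auto)
    also have "\<dots> = Sf (\<lambda>m. P m / (2 * real m)^(Suc k)) y"
      by (rule Cotk_U[OF ok2 P0 gU y])
    also have "(\<lambda>m. P m / (2 * real m)^(Suc k)) = CC n (s1 # r)"
      by (simp add: P_def sk fun_eq_iff)
    finally show ?thesis .
  qed
  have "QQ (cat [(1, Form tan # replicate k (Form cot)), (-1, (Form tan # replicate k (Form cot)) @ [Form csc, Fun sec])] (W r n))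
      (Sf (CC n (s1 # r)))"
    by (rule QQ_step[OF Cons.IH[OF r] Sf_cont[OF ok1] H])
  then show ?case unfolding k_def by (simp only: W_Cons p_def append_Cons)
qed




definition LS :: "nat \<Rightarrow> nat list \<Rightarrow> nat list set" where
  "LS n s = {ns. length ns = length s \<and> sorted_wrt (>) ns \<and> (\<forall>m\<in>set ns. n < m)}"

definition low :: "nat \<Rightarrow> nat list \<Rightarrow> nat" where
  "low n ns = (case ns of [] \<Rightarrow> n | k # _ \<Rightarrow> k)"

definition Pr :: "nat list \<Rightarrow> nat list \<Rightarrow> real" where
  "Pr s ns = (\<Prod>i<length s. (2 * real (ns ! i)) ^ (s ! i))"

lemma LS_Nil: "LS n [] = {[]}"
  by (auto simp: LS_def)

lemma Pr_Cons: "Pr (s1 # r) (m # ns) = (2 * real m) ^ s1 * Pr r ns"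
  unfolding Pr_def by (simp only: length_Cons prod.lessThan_Suc_shift nth_Cons_0 nth_Cons_Suc)

lemma LS_Cons_mem: "m # ns \<in> LS n (s1 # r) \<longleftrightarrow> ns \<in> LS n r \<and> low n ns < m"
proof
  assume h: "m # ns \<in> LS n (s1 # r)"
  then have a: "length ns = length r" "sorted_wrt (>) ns" "\<forall>x\<in>set ns. x < m" "n < m" "\<forall>x\<in>set ns. n < x"
    by (auto simp: LS_def)
  then show "ns \<in> LS n r \<and> low n ns < m"
    by (cases ns) (auto simp: LS_def low_def)
next
  assume h: "ns \<in> LS n r \<and> low n ns < m"
  then have a: "length ns = length r" "sorted_wrt (>) ns" "\<forall>x\<in>set ns. n < x" "low n ns < m"
    by (auto simp: LS_def)
  have b: "\<forall>x\<in>set ns. x < m \<and> n < m"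
  proof (cases ns)
    case Nil then show ?thesis by simp
  next
    case (Cons x0 rest)
    then show ?thesis using a by (auto simp: low_def)
  qed
  have "n < m"
  proof (cases ns)
    case Nil then show ?thesis using a by (simp add: low_def)
  next
    case (Cons x0 rest)
    then show ?thesis using b by auto
  qed
  then show "m # ns \<in> LS n (s1 # r)" using a b by (auto simp: LS_def)
qed

lemma LS_Cons: "LS n (s1 # r) = (\<lambda>(m, ns). m # ns) ` (SIGMA m:UNIV. {ns \<in> LS n r. low n ns < m})"
proof
  show "LS n (s1 # r) \<subseteq> (\<lambda>(m, ns). m # ns) ` (SIGMA m:UNIV. {ns \<in> LS n r. low n ns < m})"
  proof
    fix x assume x: "x \<in> LS n (s1 # r)"
    then obtain m ns where "x = m # ns" by (cases x) (auto simp: LS_def)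
    then show "x \<in> (\<lambda>(m, ns). m # ns) ` (SIGMA m:UNIV. {ns \<in> LS n r. low n ns < m})"
      using x LS_Cons_mem by (auto intro!: image_eqI[of _ _ "(m, ns)"])
  qed
  show "(\<lambda>(m, ns). m # ns) ` (SIGMA m:UNIV. {ns \<in> LS n r. low n ns < m}) \<subseteq> LS n (s1 # r)"
    using LS_Cons_mem by auto
qed

lemma comb:
  "(\<And>m. 0 \<le> g m) \<Longrightarrow> ((\<lambda>m. CC n s m * g m) has_sum T) UNIV
    \<Longrightarrow> ((\<lambda>ns. g (low n ns) / Pr s ns) has_sum T) (LS n s)"
proof (induction s arbitrary: g T)
  case Nil
  have "((\<lambda>m. CC n [] m * g m) has_sum g n) UNIV"
  proof -
    have "((\<lambda>m. CC n [] m * g m) has_sum g n) {n}" by (rule has_sum_finiteI) simp_all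
    then show ?thesis by (rule has_sum_cong_neutral[THEN iffD1, rotated -1]) auto
  qed
  then have "T = g n" using Nil.prems(2) has_sum_unique by blast
  moreover have "((\<lambda>ns. g (low n ns) / Pr [] ns) has_sum g n) {[]}"
    by (rule has_sum_finiteI) (simp_all add: low_def Pr_def)
  ultimately show ?case by (simp add: LS_Nil)
next
  case (Cons s1 r)
  define B where "B m = {ns \<in> LS n r. low n ns < m}" for m
  define f where "f = (\<lambda>(m, ns). g m / (2 * real m) ^ s1 * (1 / Pr r ns))"
  have CCnn: "0 \<le> CC n r k" for k
    by (induction r arbitrary: k) (auto intro!: sum_nonneg divide_nonneg_nonneg)
  have Prnn: "0 \<le> Pr r ns" for ns unfolding Pr_def by (auto intro!: prod_nonneg)
  have inner: "((\<lambda>ns. f (m, ns)) has_sum (CC n (s1 # r) m * g m)) (B m)" for m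
  proof -
    define g' where "g' k = (if k < m then 1 else (0::real))" for k
    have h1: "((\<lambda>k. CC n r k * g' k) has_sum (\<Sum>k<m. CC n r k)) UNIV"
    proof -
      have "((\<lambda>k. CC n r k * g' k) has_sum (\<Sum>k<m. CC n r k * g' k)) {..<m}" by (rule has_sum_finite) simp
      moreover have "(\<Sum>k<m. CC n r k * g' k) = (\<Sum>k<m. CC n r k)" by (simp add: g'_def)
      ultimately have "((\<lambda>k. CC n r k * g' k) has_sum (\<Sum>k<m. CC n r k)) {..<m}" by simp
      then show ?thesis by (rule has_sum_cong_neutral[THEN iffD1, rotated -1]) (auto simp: g'_def)
    qed
    have "((\<lambda>ns. g' (low n ns) / Pr r ns) has_sum (\<Sum>k<m. CC n r k)) (LS n r)"
      by (rule Cons.IH[OF _ h1]) (simp add: g'_def)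
    then have "((\<lambda>ns. g' (low n ns) / Pr r ns) has_sum (\<Sum>k<m. CC n r k)) (B m)"
      by (rule has_sum_cong_neutral[THEN iffD1, rotated -1]) (auto simp: B_def g'_def)
    then have A: "((\<lambda>ns. g m / (2 * real m) ^ s1 * (g' (low n ns) / Pr r ns)) has_sum (g m / (2 * real m) ^ s1 * (\<Sum>k<m. CC n r k))) (B m)"
      by (rule has_sum_cmult_right)
    have "((\<lambda>ns. f (m, ns)) has_sum (g m / (2 * real m) ^ s1 * (\<Sum>k<m. CC n r k))) (B m)"
      by (rule has_sum_cong[THEN iffD1, OF _ A]) (auto simp: f_def B_def g'_def)
    moreover have "g m / (2 * real m) ^ s1 * (\<Sum>k<m. CC n r k) = CC n (s1 # r) m * g m" by simp
    ultimately show ?thesis by (simp add: mult.commute)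
  qed
  have fnn: "0 \<le> f x" for x using Cons.prems(1) Prnn unfolding f_def by (auto split: prod.splits)
  have summ: "f summable_on Sigma UNIV B"
    by (rule summable_on_SigmaI[OF inner]) (use Cons.prems(2) fnn in \<open>auto simp: has_sum_imp_summable\<close>)
  have sig: "(f has_sum T) (Sigma UNIV B)"
    by (rule has_sum_SigmaI[OF inner Cons.prems(2) summ])
  have inj: "inj_on (\<lambda>(m, ns). m # ns) (Sigma UNIV B)" by (auto simp: inj_on_def)
  have "((\<lambda>ns. g (low n ns) / Pr (s1 # r) ns) \<circ> (\<lambda>(m, ns). m # ns)) = f"
    by (auto simp: fun_eq_iff f_def low_def Pr_Cons)
  then have "(((\<lambda>ns. g (low n ns) / Pr (s1 # r) ns) \<circ> (\<lambda>(m, ns). m # ns)) has_sum T) (Sigma UNIV B)"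
    using sig by simp
  then have "((\<lambda>ns. g (low n ns) / Pr (s1 # r) ns) has_sum T) ((\<lambda>(m, ns). m # ns) ` Sigma UNIV B)"
    using has_sum_reindex[OF inj] by blast
  then show ?case unfolding LS_Cons B_def .
qed




definition q :: "nat \<Rightarrow> real" where "q m = real m powr (1/4)"

lemma q_nonneg: "0 \<le> q m" by (simp add: q_def)

lemma q4: "q m ^ 4 = real m"
proof (cases "m = 0")
  case True then show ?thesis by (simp add: q_def)
next
  case False
  then have "(real m powr (1/4)) ^ 4 = real m powr (of_nat 4 * (1/4))"
    by (intro powr_power) simp
  also have "\<dots> = real m" by simp
  finally show ?thesis by (simp add: q_def)
qed

lemma quart:
  fixes u v :: real
  assumes "0 \<le> v" "v \<le> u" "u^4 - v^4 = 1"
  shows "1 \<le> 4 * u^3 * (u - v)"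
proof -
  have f: "u^4 - v^4 = (u - v) * (u^3 + u^2 * v + u * v^2 + v^3)"
    by (simp add: algebra_simps power2_eq_square power3_eq_cube power4_eq_xxxx)
  have u0: "0 \<le> u" using assms by simp
  have b: "u^3 + u^2 * v + u * v^2 + v^3 \<le> 4 * u^3"
  proof -
    have "u^2 * v \<le> u^2 * u" using assms by (intro mult_left_mono) auto
    moreover have "u * v^2 \<le> u * u^2" using assms u0 by (intro mult_left_mono power_mono) auto
    moreover have "v^3 \<le> u^3" using assms by (intro power_mono) auto
    ultimately show ?thesis by (simp add: power2_eq_square power3_eq_cube)
  qed
  have "1 = (u - v) * (u^3 + u^2 * v + u * v^2 + v^3)" using f assms by simp
  also have "\<dots> \<le> (u - v) * (4 * u^3)" using b assms by (intro mult_left_mono) auto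
  finally show ?thesis by (simp add: algebra_simps)
qed

lemma sumq: "(\<Sum>k<Suc m. q k / real k) \<le> 4 * q m"
proof (induction m)
  case 0 then show ?case by (simp add: q_def)
next
  case (Suc m)
  define u where "u = q (Suc m)"
  define v where "v = q m"
  have u4: "u^4 = real m + 1" unfolding u_def using q4[of "Suc m"] by simp
  have v4: "v^4 = real m" unfolding v_def using q4[of m] by simp
  have v0: "0 \<le> v" unfolding v_def by (rule q_nonneg)
  have u0: "0 < u"
  proof -
    have "0 \<le> u" unfolding u_def by (rule q_nonneg)
    moreover have "u \<noteq> 0" using u4 by auto
    ultimately show ?thesis by simp
  qed
  have vu: "v \<le> u"
  proof -
    have "v^4 \<le> u^4" using u4 v4 by simp
    then show ?thesis using power_mono_iff[of v u 4] v0 u0 by simp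
  qed
  have key: "1 \<le> 4 * u^3 * (u - v)" by (rule quart[OF v0 vu]) (simp add: u4 v4)
  have u3: "0 < u^3" using u0 by simp
  have "q (Suc m) / real (Suc m) = u / u^4" unfolding u_def[symmetric] using u4 by simp
  also have "\<dots> = 1 / u^3" using u0 by (simp add: power4_eq_xxxx power3_eq_cube)
  also have "\<dots> \<le> 4 * (u - v)"
  proof -
    have "1 \<le> 4 * (u - v) * u^3" using key by (simp add: algebra_simps)
    then show ?thesis using u3 by (simp add: pos_divide_le_eq)
  qed
  finally have step: "q (Suc m) / real (Suc m) \<le> 4 * (u - v)" .
  have "(\<Sum>k<Suc (Suc m). q k / real k) = (\<Sum>k<Suc m. q k / real k) + q (Suc m) / real (Suc m)"
    by simp
  also have "\<dots> \<le> 4 * v + 4 * (u - v)" using Suc step unfolding v_def by simp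
  finally show ?case unfolding u_def by simp
qed

lemma CC_0: "s \<noteq> [] \<Longrightarrow> CC n s 0 = 0"
  by (cases s) auto

lemma CC_nonneg: "0 \<le> CC n s m"
  by (induction s arbitrary: m) (auto intro!: sum_nonneg divide_nonneg_nonneg)

lemma CC_decay: "s \<noteq> [] \<Longrightarrow> (\<forall>j\<in>set s. 1 \<le> j) \<Longrightarrow> CC n s m * real m \<le> 2 ^ length s * q m"
proof (induction s arbitrary: m)
  case Nil then show ?case by simp
next
  case (Cons s1 r)
  then have s1: "1 \<le> s1" and r: "\<forall>j\<in>set r. 1 \<le> j" by auto
  show ?case
  proof (cases "m = 0")
    case True then show ?thesis by (simp add: q_def)
  next
    case False
    define \<Sigma> where "\<Sigma> = (\<Sum>k<m. CC n r k)"
    have S0: "0 \<le> \<Sigma>" unfolding \<Sigma>_def by (intro sum_nonneg CC_nonneg)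
    have pw: "2 * real m \<le> (2 * real m) ^ s1"
      using power_increasing[OF s1, of "2 * real m"] False by simp
    have "CC n (s1 # r) m * real m = \<Sigma> / (2 * real m) ^ s1 * real m" by (simp add: \<Sigma>_def)
    also have "\<dots> \<le> \<Sigma> / (2 * real m) * real m"
      using S0 pw False by (intro mult_right_mono divide_left_mono) auto
    also have "\<dots> = \<Sigma> / 2" using False by simp
    finally have A: "CC n (s1 # r) m * real m \<le> \<Sigma> / 2" .
    have qm1: "1 \<le> q m" unfolding q_def using False by (intro ge_one_powr_ge_zero) auto
    show ?thesis
    proof (cases "r = []")
      case True
      have "\<Sigma> \<le> 1" unfolding \<Sigma>_def True by (simp add: sum.If_cases)
      then have "\<Sigma> / 2 \<le> 1 / 2" by simp
      then have "CC n (s1 # r) m * real m \<le> 1 / 2" by (rule order_trans[OF A])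
      also have "\<dots> \<le> 2 ^ length (s1 # r) * q m" using qm1 True by simp
      finally show ?thesis .
    next
      case False
      define D :: real where "D = 2 ^ length r"
      have IH: "CC n r k * real k \<le> D * q k" for k unfolding D_def by (rule Cons.IH[OF False r])
      have b: "CC n r k \<le> D * (q k / real k)" for k
      proof (cases "k = 0")
        case True then show ?thesis using CC_0[OF False] by simp
      next
        case False
        then show ?thesis using IH[of k] by (simp add: field_simps)
      qed
      have "\<Sigma> \<le> (\<Sum>k<m. D * (q k / real k))" unfolding \<Sigma>_def by (intro sum_mono b)
      also have "\<dots> \<le> (\<Sum>k<Suc m. D * (q k / real k))"
        by (intro sum_mono2) (auto simp: D_def q_nonneg)
      also have "\<dots> = D * (\<Sum>k<Suc m. q k / real k)" by (rule sum_distrib_left[symmetric])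
      also have "\<dots> \<le> D * (4 * q m)" by (intro mult_left_mono sumq) (simp add: D_def)
      finally have "\<Sigma> \<le> D * (4 * q m)" .
      then have "\<Sigma> / 2 \<le> D * (4 * q m) / 2" by simp
      then have "CC n (s1 # r) m * real m \<le> D * (4 * q m) / 2" by (rule order_trans[OF A])
      also have "\<dots> = 2 ^ length (s1 # r) * q m" by (simp add: D_def)
      finally show ?thesis .
    qed
  qed
qed




lemma bb_powr: "1 \<le> m \<Longrightarrow> bb m \<le> real m powr (-1/2)"
proof -
  assume m: "1 \<le> m"
  have rm: "real m \<noteq> 0" using m by simp
  have "(real m powr (-1/2))^2 = real m powr (of_nat 2 * (-1/2))"
    by (rule powr_power[OF rm])
  also have "of_nat 2 * (-1/2) = (-1::real)" by simp
  also have "real m powr (-1) = inverse (real m powr 1)" by (rule powr_minus)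
  also have "real m powr 1 = real m" by simp
  finally have e0: "(real m powr (-1/2))^2 = inverse (real m)" .
  have e: "(real m powr (-1/2))^2 = 1 / real m" unfolding e0 by (rule inverse_eq_divide)
  have p: "0 < 2 * real m + 1" by simp
  have "bb m ^ 2 \<le> 1 / (2 * real m + 1)"
    using bb_sq[of m] p by (simp add: pos_le_divide_eq)
  also have "\<dots> \<le> 1 / real m" using m by (intro divide_left_mono) auto
  finally have "bb m ^ 2 \<le> (real m powr (-1/2))^2" using e by simp
  then show ?thesis by (rule power2_le_imp_le) simp
qed

lemma CC_powr:
  assumes "s \<noteq> []" "\<forall>j\<in>set s. 1 \<le> j" "1 \<le> m"
  shows "CC n s m \<le> 2 ^ length s * real m powr (-3/4)"
proof -
  have "CC n s m * real m \<le> 2 ^ length s * q m" by (rule CC_decay[OF assms(1,2)])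
  then have "CC n s m \<le> 2 ^ length s * (q m / real m)" using assms(3) by (simp add: field_simps)
  also have "q m / real m = real m powr (-3/4)"
  proof -
    have "real m powr (1/4 - 1) = real m powr (1/4) / real m powr 1" by (rule powr_diff)
    then show ?thesis using assms(3) by (simp add: q_def)
  qed
  finally show ?thesis .
qed

lemma summable_CC_bb:
  assumes "s \<noteq> []" "\<forall>j\<in>set s. 1 \<le> j"
  shows "summable (\<lambda>m. CC n s m * bb m)"
proof (rule summable_comparison_test')
  show "summable (\<lambda>m. 2 ^ length s * real m powr (-5/4))"
    by (intro summable_mult) (simp add: summable_real_powr_iff)
  fix m :: nat
  show "norm (CC n s m * bb m) \<le> 2 ^ length s * real m powr (-5/4)"
  proof (cases "m = 0")
    case True then show ?thesis using CC_0[OF assms(1)] by simp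
  next
    case False
    then have m: "1 \<le> m" by simp
    have "norm (CC n s m * bb m) = CC n s m * bb m" using CC_nonneg bb_nonneg by simp
    also have "\<dots> \<le> (2 ^ length s * real m powr (-3/4)) * real m powr (-1/2)"
      by (intro mult_mono CC_powr[OF assms m] bb_powr[OF m]) (auto simp: bb_nonneg)
    also have "\<dots> = 2 ^ length s * real m powr (-5/4)"
    proof -
      have "real m powr (-3/4) * real m powr (-1/2) = real m powr (-3/4 + -1/2)" by (rule powr_add[symmetric])
      then show ?thesis by simp
    qed
    finally show ?thesis .
  qed
qed




lemma G_deriv:
  assumes s: "\<forall>j\<in>set s. 1 \<le> j" and y: "y \<in> II"
  shows "(iter_int_lw (W s n) has_real_derivative tan y * Sf (CC n s) y) (at y)"
proof -
  have Q: "QQ (W s n) (Sf (CC n s))" by (rule QQ_all[OF s])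
  have gw: "gw (snd x)" if "x \<in> set (W s n)" for x using Q that unfolding QQ_def by auto
  have sm: "(\<Sum>x\<leftarrow>W s n. fst x * dens (snd x) t) = tan t * Sf (CC n s) t" if "t \<in> II" for t
    using Q that unfolding QQ_def by auto
  have ctS: "continuous_on II (\<lambda>t. tan t * Sf (CC n s) t)"
    by (rule continuous_on_mult[OF cont_tan Sf_cont[OF psok_CC[OF s]]])
  have eq: "Prim (\<lambda>t. tan t * Sf (CC n s) t) x = iter_int_lw (W s n) x" if x: "x \<in> II" for x
  proof -
    have "iter_int_lw (W s n) x = (\<Sum>z\<leftarrow>W s n. fst z * Prim (dens (snd z)) x)"
      unfolding iter_int_lw_alt using gw by (intro arg_cong[where f=sum_list] map_cong) (auto simp: gw_iter)
    also have "\<dots> = Prim (\<lambda>t. \<Sum>z\<leftarrow>W s n. fst z * dens (snd z) t) x"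
      by (rule conjunct1[OF Prim_sum_list[OF _ x], symmetric]) (use gw gw_good good_def in auto)
    also have "\<dots> = Prim (\<lambda>t. tan t * Sf (CC n s) t) x"
      by (rule Prim_cong[OF _ x]) (simp add: sm)
    finally show ?thesis by simp
  qed
  show ?thesis
    by (rule has_field_derivative_transform_within_open[OF FTC_I[OF ctS y] _ y eq]) simp
qed

lemma Sf_suminf: "Sf c y = (\<Sum>m. c m * a m (sin y))"
  unfolding Sf_def ps_def a_eq by (simp add: mult.assoc)

lemma sums_CC:
  assumes "s \<noteq> []" "\<forall>j\<in>set s. 1 \<le> j"
  shows "(\<lambda>m. CC n s m * a m (sin y)) sums Sf (CC n s) y"
proof -
  have "summable (\<lambda>m. CC n s m * a m (sin y))"
  proof (rule summable_comparison_test'[OF summable_CC_bb[OF assms]])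
    fix m
    have s1: "sin y ^ 2 \<le> 1" using sin_cos_squared_add[of y] zero_le_power2[of "cos y"] by linarith
    have "(sin y ^ 2) ^ m \<le> 1" by (rule power_le_one[OF _ s1]) simp
    then have "bb m * (sin y ^ 2) ^ m \<le> bb m * 1" by (rule mult_left_mono) (rule bb_nonneg)
    then have "a m (sin y) \<le> bb m" unfolding a_eq by simp
    then show "norm (CC n s m * a m (sin y)) \<le> CC n s m * bb m"
      using CC_nonneg[of n s m] a_nonneg[of m "sin y"] by (simp add: abs_mult mult_left_mono)
  qed
  then show ?thesis unfolding Sf_suminf by (rule summable_sums)
qed

lemma ps_cont:
  assumes sm: "summable (\<lambda>m. \<bar>e m\<bar>)"
  shows "continuous_on {-1..1} (ps e)"
proof -
  have ul: "uniform_limit {-1..1} (\<lambda>N x. \<Sum>i<N. e i * x^i) (\<lambda>x. \<Sum>i. e i * x^i) sequentially"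
  proof (rule Weierstrass_m_test[OF _ sm])
    fix i and x :: real assume "x \<in> {-1..1}"
    then have "\<bar>x\<bar>^i \<le> 1" by (intro power_le_one) auto
    then show "norm (e i * x^i) \<le> \<bar>e i\<bar>" by (simp add: abs_mult power_abs mult_left_le)
  qed
  have "continuous_on {-1..1} (\<lambda>x. \<Sum>i. e i * x^i)"
    by (rule uniform_limit_theorem[OF _ ul]) (auto intro!: always_eventually continuous_intros)
  then show ?thesis unfolding ps_def[abs_def] .
qed


lemma key_II:
  assumes sj: "\<forall>j\<in>set s. 1 \<le> j" and z: "z \<in> II" and z0: "z \<noteq> 0"
  shows "cot z * deriv (iter_int_lw (W s n)) z = Sf (CC n s) z"
proof -
  have d: "deriv (iter_int_lw (W s n)) z = tan z * Sf (CC n s) z"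
    by (rule DERIV_imp_deriv[OF G_deriv[OF sj z]])
  have c: "cos z \<noteq> 0" using cos_pos_II[OF z] by simp
  have sn: "sin z \<noteq> 0"
  proof
    assume "sin z = 0"
    then have "z = 0" using z sin_eq_0_pi[of z] by auto
    then show False using z0 by simp
  qed
  show ?thesis unfolding d cot_def tan_def using c sn by (simp add: field_simps)
qed

lemma sin2_range: "sin z ^ 2 \<in> {-1..1::real}"
proof -
  have "sin z ^ 2 \<le> 1" using sin_cos_squared_add[of z] zero_le_power2[of "cos z"] by linarith
  moreover have "0 \<le> sin z ^ 2" by simp
  ultimately have "-1 \<le> sin z ^ 2 \<and> sin z ^ 2 \<le> 1" by linarith
  then show ?thesis by simp
qed

theorem theorem2p1:
  fixes n :: nat and s :: "nat list" and y :: real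
  assumes "s \<noteq> []" and "\<forall>j\<in>set s. 1 \<le> j"
    and "-pi/2 \<le> y" and "y \<le> pi/2"
  shows "\<exists>L. ((\<lambda>ns. a (hd ns) (sin y) / (\<Prod>i<length s. (2 * real (ns ! i)) ^ (s ! i)))
                 has_sum L) {ns. length ns = length s \<and> sorted_wrt (>) ns \<and> (\<forall>m\<in>set ns. n < m)}
           \<and> (if y = pi/2 then
                ((\<lambda>z. cot z * deriv (iter_int_lw (W s n)) z) \<longlongrightarrow> L) (at_left (pi/2))
              else if y = -pi/2 then
                ((\<lambda>z. cot z * deriv (iter_int_lw (W s n)) z) \<longlongrightarrow> L) (at_right (-pi/2))
              else
                iter_int_lw (W s n) differentiable (at y)
                \<and> L = cot y * deriv (iter_int_lw (W s n)) y)"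
proof -
  note sne = assms(1) and sj = assms(2)
  define L where "L = Sf (CC n s) y"
  define e where "e = (\<lambda>m. CC n s m * bb m)"
  have hs: "((\<lambda>ns. a (hd ns) (sin y) / (\<Prod>i<length s. (2 * real (ns ! i)) ^ (s ! i)))
                 has_sum L) {ns. length ns = length s \<and> sorted_wrt (>) ns \<and> (\<forall>m\<in>set ns. n < m)}"
  proof -
    have h1: "((\<lambda>m. CC n s m * a m (sin y)) has_sum L) UNIV"
      unfolding L_def by (rule sums_nonneg_imp_has_sum[OF sums_CC[OF sne sj]]) (simp add: CC_nonneg a_nonneg)
    have h2: "((\<lambda>ns. a (low n ns) (sin y) / Pr s ns) has_sum L) (LS n s)"
      by (rule comb[OF a_nonneg h1])
    have "((\<lambda>ns. a (hd ns) (sin y) / (\<Prod>i<length s. (2 * real (ns ! i)) ^ (s ! i))) has_sum L) (LS n s)"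
    proof (rule has_sum_cong[THEN iffD1, OF _ h2])
      fix ns assume "ns \<in> LS n s"
      then have "ns \<noteq> []" using sne by (auto simp: LS_def)
      then show "a (low n ns) (sin y) / Pr s ns = a (hd ns) (sin y) / (\<Prod>i<length s. (2 * real (ns ! i)) ^ (s ! i))"
        by (cases ns) (auto simp: low_def Pr_def)
    qed
    then show ?thesis by (simp add: LS_def)
  qed
  have sme: "summable (\<lambda>m. \<bar>e m\<bar>)"
    using summable_CC_bb[OF sne sj] CC_nonneg bb_nonneg unfolding e_def by (simp add: abs_mult)
  have pc: "continuous_on {-1..1} (ps e)" by (rule ps_cont[OF sme])
  have Sfps: "Sf (CC n s) z = ps e (sin z ^ 2)" for z unfolding Sf_def e_def ..
  have lim_gen: "((\<lambda>z. ps e (sin z ^ 2)) \<longlongrightarrow> ps e (sin x ^ 2)) (at x within A)" for x A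
  proof (rule continuous_on_tendsto_compose[OF pc])
    show "((\<lambda>z. sin z ^ 2) \<longlongrightarrow> sin x ^ 2) (at x within A)" by (intro tendsto_intros)
    show "sin x ^ 2 \<in> {-1..1}" by (rule sin2_range)
    show "\<forall>\<^sub>F z in at x within A. sin z ^ 2 \<in> {-1..1}" by (intro always_eventually allI sin2_range)
  qed
  show ?thesis
  proof (rule exI[of _ L], intro conjI hs)
    show "if y = pi/2 then
                ((\<lambda>z. cot z * deriv (iter_int_lw (W s n)) z) \<longlongrightarrow> L) (at_left (pi/2))
              else if y = -pi/2 then
                ((\<lambda>z. cot z * deriv (iter_int_lw (W s n)) z) \<longlongrightarrow> L) (at_right (-pi/2))
              else
                iter_int_lw (W s n) differentiable (at y)
                \<and> L = cot y * deriv (iter_int_lw (W s n)) y"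
    proof (cases "y = pi/2")
      case True
      have Le: "L = ps e (sin (pi/2) ^ 2)" unfolding L_def True Sfps ..
      have ev: "\<forall>\<^sub>F z in at_left (pi/2). ps e (sin z ^ 2) = cot z * deriv (iter_int_lw (W s n)) z"
      proof (rule eventually_mono)
        show "\<forall>\<^sub>F z in at_left (pi/2). z \<in> {0<..<pi/2}" by (rule eventually_at_left_real) simp
      next
        fix z :: real assume "z \<in> {0<..<pi/2}"
        then have "z \<in> II" "z \<noteq> 0" by auto
        then show "ps e (sin z ^ 2) = cot z * deriv (iter_int_lw (W s n)) z"
          using key_II[OF sj] Sfps by simp
      qed
      have "((\<lambda>z. cot z * deriv (iter_int_lw (W s n)) z) \<longlongrightarrow> L) (at_left (pi/2))"
        unfolding Le by (rule Lim_transform_eventually[OF lim_gen ev])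
      then show ?thesis using True by simp
    next
      case False
      show ?thesis
      proof (cases "y = -pi/2")
        case True
        have Le: "L = ps e (sin (-(pi/2)) ^ 2)" unfolding L_def True Sfps by simp
        have ev: "\<forall>\<^sub>F z in at_right (-(pi/2)). ps e (sin z ^ 2) = cot z * deriv (iter_int_lw (W s n)) z"
        proof (rule eventually_mono)
          show "\<forall>\<^sub>F z in at_right (-(pi/2)). z \<in> {-(pi/2)<..<0}" by (rule eventually_at_right_real) simp
        next
          fix z :: real assume "z \<in> {-(pi/2)<..<0}"
          then have "z \<in> II" "z \<noteq> 0" by auto
          then show "ps e (sin z ^ 2) = cot z * deriv (iter_int_lw (W s n)) z"
            using key_II[OF sj] Sfps by simp
        qed
        have "((\<lambda>z. cot z * deriv (iter_int_lw (W s n)) z) \<longlongrightarrow> L) (at_right (-(pi/2)))"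
          unfolding Le by (rule Lim_transform_eventually[OF lim_gen ev])
        then show ?thesis using True False by simp
      next
        case False2: False
        have yII: "y \<in> II" using assms(3,4) False False2 by auto
        have dG: "(iter_int_lw (W s n) has_real_derivative tan y * Sf (CC n s) y) (at y)"
          by (rule G_deriv[OF sj yII])
        have diff: "iter_int_lw (W s n) differentiable (at y)"
          using dG unfolding has_field_derivative_def by (rule differentiableI)
        have "L = cot y * deriv (iter_int_lw (W s n)) y"
        proof (cases "y = 0")
          case True
          then show ?thesis unfolding L_def using CC_0[OF sne] by (simp add: Sf_zero cot_def)
        next
          case False
          then show ?thesis unfolding L_def using key_II[OF sj yII] by simp
        qed
        then show ?thesis using False False2 diff by simp
      qed
    qed
  qed
qed


end
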